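(* Let $H$ be a $k$-linear semi-Hopf category, $A$ a right $H$-comodule category and $B=A^{{\rm co}H}$. For $x,y,z\in X$ let ${\rm can}'^{y}_{zx}:A_{zx}\otimes_{B_x}A_{xy}\to A_{zy}\otimes H_{zx}$, ${\rm can}'^{y}_{zx}(a\otimes_{B_x}a')=a_{[0]}a'\otimes a_{[1]}$. The following are equivalent: (1) ${\rm can}'^{y}_{zx}$ is bijective for all $x,y,z\in X$; (2) for all $x,z\in X$, ${\rm can}'^{z}_{zx}$ is bijective and ${\rm can}'^{x}_{zx}$ has a left inverse; (3) for all $x,z\in X$ there is a $k$-linear map $\gamma'_{zx}:H_{zx}\to A_{zx}\otimes_{B_x}A_{xz}$, $\gamma'_{zx}(h)=\sum_i l'_i(h)\otimes_{B_x}r'_i(h)$, such that for all $h\in H_{zx}$ and $a\in A_{zx}$: $$\sum_i l'_i(h)_{[0]}r'_i(h)\otimes l'_i(h)_{[1]}=1_z\otimes h,\qquad\sum_i l'_i(a_{[1]})\otimes_{B_x}r'_i(a_{[1]})a_{[0]}=a\otimes_{B_x}1_x.$$ (When these hold, $A$ is called an $H$-Galois' category extension of $B$.)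
   Context: Let $k$ be a commutative ring; unadorned $\otimes$ is over $k$. A $k$-linear category $A$ with class of objects $X$ consists of $k$-modules $A_{xy}$, associative compositions $A_{xy}\otimes A_{yz}\to A_{xz}$, $a\otimes b\mapsto ab$, and units $1_x\in A_{xx}$. A $k$-linear semi-Hopf category $H$ (objects $X$) is a $k$-linear category in which each $H_{xy}$ is a $k$-coalgebra with $\Delta_{xy}(h)=h_{(1)}\otimes h_{(2)}$ and counit $\varepsilon_{xy}$, such that $\Delta_{xz}(hh')=h_{(1)}h'_{(1)}\otimes h_{(2)}h'_{(2)}$, $\Delta_{xx}(1_x)=1_x\otimes1_x$, $\varepsilon_{xz}(hh')=\varepsilon_{xy}(h)\varepsilon_{yz}(h')$, $\varepsilon_{xx}(1_x)=1$. A right $H$-comodule category is a $k$-linear category $A$ with objects $X$ such that each $A_{xy}$ is a right $H_{xy}$-comodule, $\rho_{xy}(a)=a_{[0]}\otimes a_{[1]}$, with $\rho_{xz}(ab)=a_{[0]}b_{[0]}\otimes a_{[1]}b_{[1]}$ and $\rho_{xx}(1_x)=1_x\otimes1_x$. Its coinvariants are the $k$-algebras $B_x=\{a\in A_{xx}\mid\rho_{xx}(a)=a\otimes1_x\}$; $A_{xy}$ is a $B_x$-$B_y$-bimodule by multiplication. *)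

theory Defs
  imports Complex_Main
begin

text \<open>A formal k-linear combination of elements of a type 'p is a finitely
supported function 'p => 'k.  Tensor products of k-modules are constructed
as usual: the free k-module on pairs (or triples) modulo the k-submodule
generated by the multilinearity (and, over an algebra B, the B-balancedness)
relations.  Elements of a tensor product are the equivalence classes.\<close>

definition fsupp :: "('p \<Rightarrow> 'k::zero) \<Rightarrow> 'p set" where
  "fsupp u = {p. u p \<noteq> 0}"

definition fdelta :: "'p \<Rightarrow> 'p \<Rightarrow> 'k::{zero,one}" where
  "fdelta p = (\<lambda>q. if q = p then 1 else 0)"

definition fadd :: "('p \<Rightarrow> 'k::plus) \<Rightarrow> ('p \<Rightarrow> 'k) \<Rightarrow> 'p \<Rightarrow> 'k" where
  "fadd u v = (\<lambda>p. u p + v p)"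

definition fdiff :: "('p \<Rightarrow> 'k::minus) \<Rightarrow> ('p \<Rightarrow> 'k) \<Rightarrow> 'p \<Rightarrow> 'k" where
  "fdiff u v = (\<lambda>p. u p - v p)"

definition fscale :: "'k::times \<Rightarrow> ('p \<Rightarrow> 'k) \<Rightarrow> 'p \<Rightarrow> 'k" where
  "fscale c u = (\<lambda>p. c * u p)"

definition lin_ext :: "('p \<Rightarrow> 'k::comm_ring_1) \<Rightarrow> ('p \<Rightarrow> 'q \<Rightarrow> 'k) \<Rightarrow> 'q \<Rightarrow> 'k" where
  "lin_ext u g = (\<lambda>q. \<Sum>p\<in>fsupp u. u p * g p q)"

definition evalsum :: "('k \<Rightarrow> 'm \<Rightarrow> 'm) \<Rightarrow> ('p \<Rightarrow> 'k::comm_ring_1) \<Rightarrow> ('p \<Rightarrow> 'm::ab_group_add) \<Rightarrow> 'm" where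
  "evalsum sc u g = (\<Sum>p\<in>fsupp u. sc (u p) (g p))"

inductive_set fspan :: "('p \<Rightarrow> 'k::comm_ring_1) set \<Rightarrow> ('p \<Rightarrow> 'k) set" for G where
  zero: "(\<lambda>_. 0) \<in> fspan G"
| gen: "g \<in> G \<Longrightarrow> g \<in> fspan G"
| add: "u \<in> fspan G \<Longrightarrow> v \<in> fspan G \<Longrightarrow> fadd u v \<in> fspan G"
| scale: "u \<in> fspan G \<Longrightarrow> fscale c u \<in> fspan G"

definition free2 :: "'a set \<Rightarrow> 'b set \<Rightarrow> ('a \<times> 'b \<Rightarrow> 'k::comm_ring_1) set" where
  "free2 M N = {u. finite (fsupp u) \<and> fsupp u \<subseteq> M \<times> N}"

definition free3 :: "'a set \<Rightarrow> 'b set \<Rightarrow> 'c set \<Rightarrow> ('a \<times> 'b \<times> 'c \<Rightarrow> 'k::comm_ring_1) set" where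
  "free3 M N P = {u. finite (fsupp u) \<and> fsupp u \<subseteq> M \<times> N \<times> P}"

definition gens2 :: "('k::comm_ring_1 \<Rightarrow> 'a::ab_group_add \<Rightarrow> 'a) \<Rightarrow> ('k \<Rightarrow> 'b::ab_group_add \<Rightarrow> 'b)
    \<Rightarrow> 'a set \<Rightarrow> 'b set \<Rightarrow> ('a \<times> 'b \<Rightarrow> 'k) set" where
  "gens2 sa sb M N =
     {fdiff (fdelta (a + a', b)) (fadd (fdelta (a, b)) (fdelta (a', b))) | a a' b. a \<in> M \<and> a' \<in> M \<and> b \<in> N}
   \<union> {fdiff (fdelta (a, b + b')) (fadd (fdelta (a, b)) (fdelta (a, b'))) | a b b'. a \<in> M \<and> b \<in> N \<and> b' \<in> N}
   \<union> {fdiff (fdelta (sa c a, b)) (fscale c (fdelta (a, b))) | c a b. a \<in> M \<and> b \<in> N}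
   \<union> {fdiff (fdelta (a, sb c b)) (fscale c (fdelta (a, b))) | c a b. a \<in> M \<and> b \<in> N}"

definition gens3 :: "('k::comm_ring_1 \<Rightarrow> 'a::ab_group_add \<Rightarrow> 'a) \<Rightarrow> ('k \<Rightarrow> 'b::ab_group_add \<Rightarrow> 'b)
    \<Rightarrow> ('k \<Rightarrow> 'c::ab_group_add \<Rightarrow> 'c) \<Rightarrow> 'a set \<Rightarrow> 'b set \<Rightarrow> 'c set \<Rightarrow> ('a \<times> 'b \<times> 'c \<Rightarrow> 'k) set" where
  "gens3 sa sb sc M N P =
     {fdiff (fdelta (a + a', b, c)) (fadd (fdelta (a, b, c)) (fdelta (a', b, c))) | a a' b c. a \<in> M \<and> a' \<in> M \<and> b \<in> N \<and> c \<in> P}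
   \<union> {fdiff (fdelta (a, b + b', c)) (fadd (fdelta (a, b, c)) (fdelta (a, b', c))) | a b b' c. a \<in> M \<and> b \<in> N \<and> b' \<in> N \<and> c \<in> P}
   \<union> {fdiff (fdelta (a, b, c + c')) (fadd (fdelta (a, b, c)) (fdelta (a, b, c'))) | a b c c'. a \<in> M \<and> b \<in> N \<and> c \<in> P \<and> c' \<in> P}
   \<union> {fdiff (fdelta (sa t a, b, c)) (fscale t (fdelta (a, b, c))) | t a b c. a \<in> M \<and> b \<in> N \<and> c \<in> P}
   \<union> {fdiff (fdelta (a, sb t b, c)) (fscale t (fdelta (a, b, c))) | t a b c. a \<in> M \<and> b \<in> N \<and> c \<in> P}
   \<union> {fdiff (fdelta (a, b, sc t c)) (fscale t (fdelta (a, b, c))) | t a b c. a \<in> M \<and> b \<in> N \<and> c \<in> P}"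

definition balgens :: "('a \<Rightarrow> 'a \<Rightarrow> 'a) \<Rightarrow> 'a set \<Rightarrow> 'a set \<Rightarrow> 'a set \<Rightarrow> ('a \<times> 'a \<Rightarrow> 'k::comm_ring_1) set" where
  "balgens m B M N = {fdiff (fdelta (m a \<beta>, a')) (fdelta (a, m \<beta> a')) | a \<beta> a'. a \<in> M \<and> \<beta> \<in> B \<and> a' \<in> N}"

definition trel :: "('p \<Rightarrow> 'k::comm_ring_1) set \<Rightarrow> ('p \<Rightarrow> 'k) set \<Rightarrow> (('p \<Rightarrow> 'k) \<times> ('p \<Rightarrow> 'k)) set" where
  "trel D G = {(u, v). u \<in> D \<and> v \<in> D \<and> fdiff u v \<in> fspan G}"

definition krel2 where
  "krel2 sa sb M N = trel (free2 M N) (gens2 sa sb M N)"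

definition krel3 where
  "krel3 sa sb sc M N P = trel (free3 M N P) (gens3 sa sb sc M N P)"

definition brel where
  "brel sa m B M N = trel (free2 M N) (gens2 sa sa M N \<union> balgens m B M N)"

definition tensK where "tensK sa sb M N = free2 M N // krel2 sa sb M N"
definition tensB where "tensB sa m B M N = free2 M N // brel sa m B M N"

definition qmap :: "('u \<Rightarrow> 'v) \<Rightarrow> ('v \<times> 'v) set \<Rightarrow> 'u set \<Rightarrow> 'v set" where
  "qmap f r C = r `` (f ` C)"

text \<open>A k-linear category with object set X: hom-sets are k-submodules
Hom x y of an ambient k-module (type 'a with scalar action sc), cmp is the
composition (a in Hom x y, b in Hom y z gives cmp a b in Hom x z), u x the
identity of x.\<close>
definition klincat :: "('k::comm_ring_1 \<Rightarrow> 'a::ab_group_add \<Rightarrow> 'a) \<Rightarrow> 'x set \<Rightarrow> ('x \<Rightarrow> 'x \<Rightarrow> 'a set)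
    \<Rightarrow> ('a \<Rightarrow> 'a \<Rightarrow> 'a) \<Rightarrow> ('x \<Rightarrow> 'a) \<Rightarrow> bool" where
  "klincat sc X Hom cmp u \<longleftrightarrow>
     module sc \<and>
     (\<forall>x\<in>X. \<forall>y\<in>X. 0 \<in> Hom x y \<and> (\<forall>a\<in>Hom x y. \<forall>b\<in>Hom x y. a + b \<in> Hom x y) \<and>
        (\<forall>c. \<forall>a\<in>Hom x y. sc c a \<in> Hom x y)) \<and>
     (\<forall>x\<in>X. \<forall>y\<in>X. \<forall>z\<in>X. \<forall>a\<in>Hom x y. \<forall>b\<in>Hom y z. cmp a b \<in> Hom x z) \<and>
     (\<forall>x\<in>X. \<forall>y\<in>X. \<forall>z\<in>X. \<forall>a\<in>Hom x y. \<forall>a'\<in>Hom x y. \<forall>b\<in>Hom y z. \<forall>b'\<in>Hom y z. \<forall>c.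
        cmp (a + a') b = cmp a b + cmp a' b \<and> cmp a (b + b') = cmp a b + cmp a b' \<and>
        cmp (sc c a) b = sc c (cmp a b) \<and> cmp a (sc c b) = sc c (cmp a b)) \<and>
     (\<forall>w\<in>X. \<forall>x\<in>X. \<forall>y\<in>X. \<forall>z\<in>X. \<forall>a\<in>Hom w x. \<forall>b\<in>Hom x y. \<forall>c\<in>Hom y z.
        cmp (cmp a b) c = cmp a (cmp b c)) \<and>
     (\<forall>x\<in>X. u x \<in> Hom x x) \<and>
     (\<forall>x\<in>X. \<forall>y\<in>X. \<forall>a\<in>Hom x y. cmp (u x) a = a \<and> cmp a (u y) = a)"

definition klinear_on :: "('k::comm_ring_1 \<Rightarrow> 'a::ab_group_add \<Rightarrow> 'a) \<Rightarrow> ('k \<Rightarrow> 'b::ab_group_add \<Rightarrow> 'b)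
    \<Rightarrow> 'a set \<Rightarrow> 'b set \<Rightarrow> ('a \<Rightarrow> 'b) \<Rightarrow> bool" where
  "klinear_on sa sb M N f \<longleftrightarrow> (\<forall>a\<in>M. f a \<in> N) \<and>
     (\<forall>a\<in>M. \<forall>a'\<in>M. f (a + a') = f a + f a') \<and> (\<forall>c. \<forall>a\<in>M. f (sa c a) = sb c (f a))"

definition qlinear_on :: "('k::comm_ring_1 \<Rightarrow> 'a::ab_group_add \<Rightarrow> 'a) \<Rightarrow> 'a set
    \<Rightarrow> ('p \<Rightarrow> 'k) set \<Rightarrow> (('p \<Rightarrow> 'k) \<times> ('p \<Rightarrow> 'k)) set \<Rightarrow> ('a \<Rightarrow> 'p \<Rightarrow> 'k) \<Rightarrow> bool" where
  "qlinear_on sa M D r f \<longleftrightarrow> (\<forall>a\<in>M. f a \<in> D) \<and>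
     (\<forall>a\<in>M. \<forall>a'\<in>M. (f (a + a'), fadd (f a) (f a')) \<in> r) \<and>
     (\<forall>c. \<forall>a\<in>M. (f (sa c a), fscale c (f a)) \<in> r)"

text \<open>Semi-Hopf category: a k-linear category whose hom-modules H x y are
k-coalgebras (comultiplication delta x y h, a representative of an element of
H x y (x)_k H x y; counit eps x y) compatible with composition and units.\<close>
definition semi_hopf_cat :: "('k::comm_ring_1 \<Rightarrow> 'h::ab_group_add \<Rightarrow> 'h) \<Rightarrow> 'x set \<Rightarrow> ('x \<Rightarrow> 'x \<Rightarrow> 'h set)
    \<Rightarrow> ('h \<Rightarrow> 'h \<Rightarrow> 'h) \<Rightarrow> ('x \<Rightarrow> 'h) \<Rightarrow> ('x \<Rightarrow> 'x \<Rightarrow> 'h \<Rightarrow> ('h \<times> 'h \<Rightarrow> 'k)) \<Rightarrow> ('x \<Rightarrow> 'x \<Rightarrow> 'h \<Rightarrow> 'k) \<Rightarrow> bool" where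
  "semi_hopf_cat sh X H mh uh dl ep \<longleftrightarrow>
     klincat sh X H mh uh \<and>
     \<comment> \<open>each H x y is a k-coalgebra\<close>
     (\<forall>x\<in>X. \<forall>y\<in>X.
        qlinear_on sh (H x y) (free2 (H x y) (H x y)) (krel2 sh sh (H x y) (H x y)) (dl x y) \<and>
        klinear_on sh (\<lambda>c d. c * d) (H x y) UNIV (ep x y) \<and>
        (\<forall>h\<in>H x y.
           (lin_ext (dl x y h) (\<lambda>(h1, h2). lin_ext (dl x y h1) (\<lambda>(g1, g2). fdelta (g1, g2, h2))),
            lin_ext (dl x y h) (\<lambda>(h1, h2). lin_ext (dl x y h2) (\<lambda>(g1, g2). fdelta (h1, g1, g2))))
           \<in> krel3 sh sh sh (H x y) (H x y) (H x y) \<and>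
           evalsum sh (dl x y h) (\<lambda>(h1, h2). sh (ep x y h1) h2) = h \<and>
           evalsum sh (dl x y h) (\<lambda>(h1, h2). sh (ep x y h2) h1) = h)) \<and>
     \<comment> \<open>compatibility with composition and units\<close>
     (\<forall>x\<in>X. \<forall>y\<in>X. \<forall>z\<in>X. \<forall>h\<in>H x y. \<forall>h'\<in>H y z.
        (dl x z (mh h h'),
         lin_ext (dl x y h) (\<lambda>(h1, h2). lin_ext (dl y z h') (\<lambda>(g1, g2). fdelta (mh h1 g1, mh h2 g2))))
        \<in> krel2 sh sh (H x z) (H x z) \<and>
        ep x z (mh h h') = ep x y h * ep y z h') \<and>
     (\<forall>x\<in>X. (dl x x (uh x), fdelta (uh x, uh x)) \<in> krel2 sh sh (H x x) (H x x) \<and> ep x x (uh x) = 1)"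

text \<open>Right H-comodule category: a k-linear category A with the same objects,
each A x y a right H x y-comodule (coaction rho x y a, a representative of an
element of A x y (x)_k H x y), compatible with composition and units.\<close>
definition comodule_cat :: "('k::comm_ring_1 \<Rightarrow> 'h::ab_group_add \<Rightarrow> 'h) \<Rightarrow> ('x \<Rightarrow> 'x \<Rightarrow> 'h set)
    \<Rightarrow> ('h \<Rightarrow> 'h \<Rightarrow> 'h) \<Rightarrow> ('x \<Rightarrow> 'h) \<Rightarrow> ('x \<Rightarrow> 'x \<Rightarrow> 'h \<Rightarrow> ('h \<times> 'h \<Rightarrow> 'k)) \<Rightarrow> ('x \<Rightarrow> 'x \<Rightarrow> 'h \<Rightarrow> 'k)
    \<Rightarrow> ('k \<Rightarrow> 'a::ab_group_add \<Rightarrow> 'a) \<Rightarrow> 'x set \<Rightarrow> ('x \<Rightarrow> 'x \<Rightarrow> 'a set) \<Rightarrow> ('a \<Rightarrow> 'a \<Rightarrow> 'a) \<Rightarrow> ('x \<Rightarrow> 'a)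
    \<Rightarrow> ('x \<Rightarrow> 'x \<Rightarrow> 'a \<Rightarrow> ('a \<times> 'h \<Rightarrow> 'k)) \<Rightarrow> bool" where
  "comodule_cat sh H mh uh dl ep sa X A ma ua rho \<longleftrightarrow>
     klincat sa X A ma ua \<and>
     (\<forall>x\<in>X. \<forall>y\<in>X.
        qlinear_on sa (A x y) (free2 (A x y) (H x y)) (krel2 sa sh (A x y) (H x y)) (rho x y) \<and>
        (\<forall>a\<in>A x y.
           (lin_ext (rho x y a) (\<lambda>(a0, h). lin_ext (rho x y a0) (\<lambda>(b, g). fdelta (b, g, h))),
            lin_ext (rho x y a) (\<lambda>(a0, h). lin_ext (dl x y h) (\<lambda>(g1, g2). fdelta (a0, g1, g2))))
           \<in> krel3 sa sh sh (A x y) (H x y) (H x y) \<and>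
           evalsum sa (rho x y a) (\<lambda>(a0, h). sa (ep x y h) a0) = a)) \<and>
     (\<forall>x\<in>X. \<forall>y\<in>X. \<forall>z\<in>X. \<forall>a\<in>A x y. \<forall>b\<in>A y z.
        (rho x z (ma a b),
         lin_ext (rho x y a) (\<lambda>(a0, h). lin_ext (rho y z b) (\<lambda>(b0, g). fdelta (ma a0 b0, mh h g))))
        \<in> krel2 sa sh (A x z) (H x z)) \<and>
     (\<forall>x\<in>X. (rho x x (ua x), fdelta (ua x, uh x)) \<in> krel2 sa sh (A x x) (H x x))"

definition coinv :: "('k::comm_ring_1 \<Rightarrow> 'h::ab_group_add \<Rightarrow> 'h) \<Rightarrow> ('x \<Rightarrow> 'x \<Rightarrow> 'h set) \<Rightarrow> ('x \<Rightarrow> 'h)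
    \<Rightarrow> ('k \<Rightarrow> 'a::ab_group_add \<Rightarrow> 'a) \<Rightarrow> ('x \<Rightarrow> 'x \<Rightarrow> 'a set) \<Rightarrow> ('x \<Rightarrow> 'x \<Rightarrow> 'a \<Rightarrow> ('a \<times> 'h \<Rightarrow> 'k))
    \<Rightarrow> 'x \<Rightarrow> 'a set" where
  "coinv sh H uh sa A rho x = {a \<in> A x x. (rho x x a, fdelta (a, uh x)) \<in> krel2 sa sh (A x x) (H x x)}"

definition canp :: "('a \<Rightarrow> 'a \<Rightarrow> 'a) \<Rightarrow> ('x \<Rightarrow> 'x \<Rightarrow> 'a \<Rightarrow> ('a \<times> 'h \<Rightarrow> 'k::comm_ring_1))
    \<Rightarrow> 'x \<Rightarrow> 'x \<Rightarrow> ('a \<times> 'a \<Rightarrow> 'k) \<Rightarrow> ('a \<times> 'h \<Rightarrow> 'k)" where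
  "canp ma rho z x u = lin_ext u (\<lambda>(a, a'). lin_ext (rho z x a) (\<lambda>(a0, h). fdelta (ma a0 a', h)))"

end

theory Submission
  imports Defs
begin

definition fin :: "'p set \<Rightarrow> ('p \<Rightarrow> 'k::comm_ring_1) set" where
  "fin S = {u. finite (fsupp u) \<and> fsupp u \<subseteq> S}"

lemma free2_fin: "free2 M N = fin (M \<times> N)"
  by (simp add: free2_def fin_def)

lemma fin_finite: "u \<in> fin S \<Longrightarrow> finite (fsupp u)"
  by (simp add: fin_def)

lemma fin_sub: "u \<in> fin S \<Longrightarrow> p \<in> fsupp u \<Longrightarrow> p \<in> S"
  by (auto simp: fin_def)

lemma lin_ext_sum:
  assumes "finite S" "fsupp u \<subseteq> S"
  shows "lin_ext u g q = (\<Sum>p\<in>S. u p * g p q)"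
  unfolding lin_ext_def
  by (rule sum.mono_neutral_left) (use assms in \<open>auto simp: fsupp_def\<close>)

lemma lin_ext_fadd:
  assumes "finite (fsupp u)" "finite (fsupp v)"
  shows "lin_ext (fadd u v) g = fadd (lin_ext u g) (lin_ext v g)"
proof (rule ext)
  fix q
  let ?S = "fsupp u \<union> fsupp v"
  have f: "finite ?S" using assms by auto
  have s: "fsupp (fadd u v) \<subseteq> ?S" by (auto simp: fsupp_def fadd_def)
  show "lin_ext (fadd u v) g q = fadd (lin_ext u g) (lin_ext v g) q"
    unfolding lin_ext_sum[OF f s] lin_ext_sum[OF f Un_upper1] lin_ext_sum[OF f Un_upper2]
    by (simp add: fadd_def ring_distribs sum.distrib)
qed

lemma lin_ext_fdiff:
  assumes "finite (fsupp u)" "finite (fsupp v)"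
  shows "lin_ext (fdiff u v) g = fdiff (lin_ext u g) (lin_ext v g)"
proof (rule ext)
  fix q
  let ?S = "fsupp u \<union> fsupp v"
  have f: "finite ?S" using assms by auto
  have s: "fsupp (fdiff u v) \<subseteq> ?S" by (auto simp: fsupp_def fdiff_def)
  show "lin_ext (fdiff u v) g q = fdiff (lin_ext u g) (lin_ext v g) q"
    unfolding lin_ext_sum[OF f s] lin_ext_sum[OF f Un_upper1] lin_ext_sum[OF f Un_upper2]
    by (simp add: fdiff_def left_diff_distrib sum_subtractf)
qed

lemma lin_ext_fscale:
  assumes "finite (fsupp u)"
  shows "lin_ext (fscale c u) g = fscale c (lin_ext u g)"
proof (rule ext)
  fix q
  have s: "fsupp (fscale c u) \<subseteq> fsupp u" by (auto simp: fsupp_def fscale_def)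
  show "lin_ext (fscale c u) g q = fscale c (lin_ext u g) q"
    unfolding lin_ext_sum[OF assms s] lin_ext_sum[OF assms order_refl]
    by (simp add: fscale_def sum_distrib_left mult.assoc)
qed

lemma lin_ext_zero: "lin_ext (\<lambda>_. 0) g = (\<lambda>_. 0)"
  by (simp add: lin_ext_def fsupp_def)

lemma lin_ext_fdelta: "lin_ext (fdelta p) g = g p"
proof (rule ext)
  fix q
  have s: "fsupp (fdelta p) \<subseteq> {p}" by (auto simp: fsupp_def fdelta_def)
  show "lin_ext (fdelta p) g q = g p q"
    using lin_ext_sum[OF _ s, of g q] by (simp add: fdelta_def)
qed

lemma lin_ext_fun_fadd: "lin_ext u (\<lambda>p. fadd (g p) (g' p)) = fadd (lin_ext u g) (lin_ext u g')"
  by (rule ext) (simp add: lin_ext_def fadd_def ring_distribs sum.distrib)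

lemma lin_ext_fun_fdiff: "lin_ext u (\<lambda>p. fdiff (g p) (g' p)) = fdiff (lin_ext u g) (lin_ext u g')"
  by (rule ext) (simp add: lin_ext_def fdiff_def right_diff_distrib sum_subtractf)

lemma lin_ext_fun_fscale: "lin_ext u (\<lambda>p. fscale c (g p)) = fscale c (lin_ext u g)"
  by (rule ext) (simp add: lin_ext_def fscale_def sum_distrib_left mult.left_commute)

lemma lin_ext_cong: "(\<And>p. p \<in> fsupp u \<Longrightarrow> g p = g' p) \<Longrightarrow> lin_ext u g = lin_ext u g'"
  unfolding lin_ext_def by (rule ext) (rule sum.cong, auto)

lemma fsupp_lin_ext: "fsupp (lin_ext u g) \<subseteq> (\<Union>p\<in>fsupp u. fsupp (g p))"
proof
  fix q assume q: "q \<in> fsupp (lin_ext u g)"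
  show "q \<in> (\<Union>p\<in>fsupp u. fsupp (g p))"
  proof (rule ccontr)
    assume "q \<notin> (\<Union>p\<in>fsupp u. fsupp (g p))"
    then have "\<forall>p\<in>fsupp u. g p q = 0" by (auto simp: fsupp_def)
    then have "lin_ext u g q = 0" by (simp add: lin_ext_def)
    with q show False by (simp add: fsupp_def)
  qed
qed

lemma lin_ext_fin:
  assumes "finite (fsupp u)" "\<And>p. p \<in> fsupp u \<Longrightarrow> g p \<in> fin S"
  shows "lin_ext u g \<in> fin S"
proof -
  have "finite (\<Union>p\<in>fsupp u. fsupp (g p))" using assms by (auto simp: fin_def)
  moreover have "(\<Union>p\<in>fsupp u. fsupp (g p)) \<subseteq> S" using assms by (auto simp: fin_def)
  ultimately show ?thesis using fsupp_lin_ext[of u g] unfolding fin_def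
    by (auto intro: finite_subset)
qed

lemma lin_ext_assoc:
  assumes "finite (fsupp u)" "\<And>p. p \<in> fsupp u \<Longrightarrow> finite (fsupp (f p))"
  shows "lin_ext (lin_ext u f) g = lin_ext u (\<lambda>p. lin_ext (f p) g)"
proof (rule ext)
  fix q
  define T where "T = (\<Union>p\<in>fsupp u. fsupp (f p))"
  have fT: "finite T" using assms by (auto simp: T_def)
  have s1: "fsupp (lin_ext u f) \<subseteq> T" using fsupp_lin_ext[of u f] by (simp add: T_def)
  have "lin_ext (lin_ext u f) g q = (\<Sum>t\<in>T. lin_ext u f t * g t q)" by (rule lin_ext_sum[OF fT s1])
  also have "\<dots> = (\<Sum>t\<in>T. \<Sum>p\<in>fsupp u. u p * f p t * g t q)"
    by (simp add: lin_ext_def sum_distrib_right)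
  also have "\<dots> = (\<Sum>p\<in>fsupp u. \<Sum>t\<in>T. u p * f p t * g t q)" by (rule sum.swap)
  also have "\<dots> = (\<Sum>p\<in>fsupp u. u p * lin_ext (f p) g q)"
  proof (rule sum.cong[OF refl])
    fix p assume p: "p \<in> fsupp u"
    have "fsupp (f p) \<subseteq> T" using p by (auto simp: T_def)
    then show "(\<Sum>t\<in>T. u p * f p t * g t q) = u p * lin_ext (f p) g q"
      using lin_ext_sum[OF fT, of "f p" g q] by (simp add: sum_distrib_left mult.assoc)
  qed
  also have "\<dots> = lin_ext u (\<lambda>p. lin_ext (f p) g) q" by (simp add: lin_ext_def)
  finally show "lin_ext (lin_ext u f) g q = lin_ext u (\<lambda>p. lin_ext (f p) g) q" .
qed

lemma lin_ext_fdelta_id: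
  assumes "finite (fsupp u)"
  shows "lin_ext u fdelta = u"
proof (rule ext)
  fix q
  have "lin_ext u fdelta q = (\<Sum>p\<in>fsupp u. if q = p then u p else 0)"
    unfolding lin_ext_def by (rule sum.cong) (auto simp: fdelta_def)
  also have "\<dots> = (if q \<in> fsupp u then u q else 0)" using assms by (simp add: sum.delta')
  also have "\<dots> = u q" by (simp add: fsupp_def)
  finally show "lin_ext u fdelta q = u q" .
qed

lemma lin_ext_fdelta_id':
  assumes "finite (fsupp u)"
  shows "lin_ext u (\<lambda>(a, b). fdelta (a, b)) = u"
  using lin_ext_fdelta_id[OF assms] by (simp add: case_prod_unfold)

lemma fsupp_zero: "fsupp (\<lambda>_. 0) = {}" by (simp add: fsupp_def)

lemma fspan_finite:
  assumes "\<And>g. g \<in> G \<Longrightarrow> finite (fsupp g)" "w \<in> fspan G"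
  shows "finite (fsupp w)"
  using assms(2)
proof induction
  case zero then show ?case by (simp add: fsupp_zero)
next
  case (gen g) then show ?case using assms(1) by simp
next
  case (add u v)
  have "fsupp (fadd u v) \<subseteq> fsupp u \<union> fsupp v" by (auto simp: fsupp_def fadd_def)
  then show ?case using add by (auto intro: finite_subset)
next
  case (scale u c)
  have "fsupp (fscale c u) \<subseteq> fsupp u" by (auto simp: fsupp_def fscale_def)
  then show ?case using scale by (auto intro: finite_subset)
qed

lemma fspan_diff:
  assumes "u \<in> fspan G" "v \<in> fspan G"
  shows "fdiff u v \<in> fspan G"
proof -
  have "fdiff u v = fadd u (fscale (-1) v)" by (rule ext) (simp add: fdiff_def fadd_def fscale_def)
  then show ?thesis using assms by (simp add: fspan.add fspan.scale)
qed

lemma fspan_sum: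
  assumes "finite S" "\<And>p. p \<in> S \<Longrightarrow> g p \<in> fspan G"
  shows "(\<lambda>q. \<Sum>p\<in>S. c p * g p q) \<in> fspan G"
  using assms
proof (induction S rule: finite_induct)
  case empty then show ?case by (simp add: fspan.zero)
next
  case (insert p S)
  have "(\<lambda>q. \<Sum>p\<in>insert p S. c p * g p q) = fadd (fscale (c p) (g p)) (\<lambda>q. \<Sum>p\<in>S. c p * g p q)"
    using insert by (simp add: fadd_def fscale_def)
  then show ?case using insert by (simp add: fspan.add fspan.scale)
qed

lemma fspan_lin_ext:
  assumes "\<And>p. p \<in> fsupp u \<Longrightarrow> g p \<in> fspan G"
  shows "lin_ext u g \<in> fspan G"
proof (cases "finite (fsupp u)")
  case True
  then show ?thesis unfolding lin_ext_def using fspan_sum[OF True assms] by simp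
next
  case False
  then have "lin_ext u g = (\<lambda>_. 0)" by (simp add: lin_ext_def)
  then show ?thesis by (simp add: fspan.zero)
qed

lemma fspan_mono: assumes "G \<subseteq> G'" "w \<in> fspan G" shows "w \<in> fspan G'"
  using assms(2) by induction (use assms(1) in \<open>auto intro: fspan.intros\<close>)

lemma fspan_map:
  assumes fin: "\<And>w. w \<in> G \<Longrightarrow> finite (fsupp w)"
    and gen: "\<And>w. w \<in> G \<Longrightarrow> lin_ext w g \<in> fspan G'"
    and w: "w \<in> fspan G"
  shows "lin_ext w g \<in> fspan G'"
  using w
proof induction
  case zero then show ?case by (simp add: lin_ext_zero fspan.zero)
next
  case (gen w) then show ?case using assms(2) by simp
next
  case (add u v)
  then show ?case using fspan_finite[OF fin add(1)] fspan_finite[OF fin add(2)]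
    by (simp add: lin_ext_fadd fspan.add)
next
  case (scale u c)
  then show ?case using fspan_finite[OF fin scale(1)]
    by (simp add: lin_ext_fscale fspan.scale)
qed

lemma trel_fin_equiv:
  fixes S :: "'p set" and G :: "('p \<Rightarrow> 'k::comm_ring_1) set"
  shows "equiv (fin S) (trel (fin S) G)"
proof (rule equivI)
  show "trel (fin S) G \<subseteq> fin S \<times> fin S" by (auto simp: trel_def)
next
  show "refl_on (fin S) (trel (fin S) G)"
  proof (rule refl_onI)
    fix u :: "'p \<Rightarrow> 'k" assume "u \<in> fin S"
    moreover have "fdiff u u = (\<lambda>_. 0)" by (rule ext) (simp add: fdiff_def)
    ultimately show "(u, u) \<in> trel (fin S) G" by (simp add: trel_def fspan.zero)
  qed
next
  show "sym (trel (fin S) G)"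
  proof (rule symI)
    fix u v :: "'p \<Rightarrow> 'k" assume "(u, v) \<in> trel (fin S) G"
    moreover have "fdiff v u = fscale (-1) (fdiff u v)" by (rule ext) (simp add: fdiff_def fscale_def)
    ultimately show "(v, u) \<in> trel (fin S) G" by (simp add: trel_def fspan.scale)
  qed
next
  show "trans (trel (fin S) G)"
  proof (rule transI)
    fix u v w :: "'p \<Rightarrow> 'k" assume "(u, v) \<in> trel (fin S) G" "(v, w) \<in> trel (fin S) G"
    moreover have "fdiff u w = fadd (fdiff u v) (fdiff v w)" by (rule ext) (simp add: fdiff_def fadd_def)
    ultimately show "(u, w) \<in> trel (fin S) G" by (simp add: trel_def fspan.add)
  qed
qed

lemma trel_refl: "u \<in> fin S \<Longrightarrow> (u, u) \<in> trel (fin S) G"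
  using trel_fin_equiv[of S G] by (auto simp: equiv_def refl_on_def)

lemma trel_sym: "(u, v) \<in> trel (fin S) G \<Longrightarrow> (v, u) \<in> trel (fin S) G"
  using trel_fin_equiv[of S G] by (auto simp: equiv_def dest: symD)

lemma trel_trans: "(u, v) \<in> trel (fin S) G \<Longrightarrow> (v, w) \<in> trel (fin S) G \<Longrightarrow> (u, w) \<in> trel (fin S) G"
  using trel_fin_equiv[of S G] by (auto simp: equiv_def dest: transD)

lemma trel_D: "(u, v) \<in> trel D G \<Longrightarrow> u \<in> D \<and> v \<in> D"
  by (simp add: trel_def)

lemma trel_eqI: "u = v \<Longrightarrow> u \<in> fin S \<Longrightarrow> (u, v) \<in> trel (fin S) G"
  by (simp add: trel_refl)

lemma trel_gen: "u \<in> D \<Longrightarrow> v \<in> D \<Longrightarrow> fdiff u v \<in> G \<Longrightarrow> (u, v) \<in> trel D G"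
  by (simp add: trel_def fspan.gen)

lemma trel_mono: "G \<subseteq> G' \<Longrightarrow> (u, v) \<in> trel D G \<Longrightarrow> (u, v) \<in> trel D G'"
  by (auto simp: trel_def intro: fspan_mono)

lemma fin_fadd: "u \<in> fin S \<Longrightarrow> v \<in> fin S \<Longrightarrow> fadd u v \<in> fin S"
proof -
  assume a: "u \<in> fin S" "v \<in> fin S"
  have "fsupp (fadd u v) \<subseteq> fsupp u \<union> fsupp v" by (auto simp: fsupp_def fadd_def)
  then show ?thesis using a by (auto simp: fin_def intro: finite_subset)
qed

lemma fin_fscale: "u \<in> fin S \<Longrightarrow> fscale c u \<in> fin S"
proof -
  assume a: "u \<in> fin S"
  have "fsupp (fscale c u) \<subseteq> fsupp u" by (auto simp: fsupp_def fscale_def)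
  then show ?thesis using a by (auto simp: fin_def intro: finite_subset)
qed

lemma fin_fdelta: "p \<in> S \<Longrightarrow> fdelta p \<in> fin S"
proof -
  assume a: "p \<in> S"
  have "fsupp (fdelta p) \<subseteq> {p}" by (auto simp: fsupp_def fdelta_def)
  then show ?thesis using a by (auto simp: fin_def intro: finite_subset)
qed

lemma trel_fadd:
  assumes "(u, u') \<in> trel (fin S) G" "(v, v') \<in> trel (fin S) G"
  shows "(fadd u v, fadd u' v') \<in> trel (fin S) G"
proof -
  have "fdiff (fadd u v) (fadd u' v') = fadd (fdiff u u') (fdiff v v')"
    by (rule ext) (simp add: fdiff_def fadd_def)
  then show ?thesis using assms by (auto simp: trel_def fspan.add fin_fadd)
qed

lemma trel_fscale:
  assumes "(u, u') \<in> trel (fin S) G"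
  shows "(fscale c u, fscale c u') \<in> trel (fin S) G"
proof -
  have "fdiff (fscale c u) (fscale c u') = fscale c (fdiff u u')"
    by (rule ext) (simp add: fdiff_def fscale_def right_diff_distrib)
  then show ?thesis using assms by (auto simp: trel_def fspan.scale fin_fscale)
qed

lemma trel_lin_cong:
  assumes u: "finite (fsupp u)" and r: "\<And>p. p \<in> fsupp u \<Longrightarrow> (g p, g' p) \<in> trel (fin S) G"
  shows "(lin_ext u g, lin_ext u g') \<in> trel (fin S) G"
proof -
  have 1: "lin_ext u g \<in> fin S" "lin_ext u g' \<in> fin S"
    using r by (auto intro!: lin_ext_fin[OF u] dest: trel_D)
  have "fdiff (lin_ext u g) (lin_ext u g') = lin_ext u (\<lambda>p. fdiff (g p) (g' p))"
    by (simp add: lin_ext_fun_fdiff)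
  moreover have "\<dots> \<in> fspan G" using r by (intro fspan_lin_ext) (simp add: trel_def)
  ultimately show ?thesis using 1 by (simp add: trel_def)
qed

lemma trel_map:
  assumes uv: "(u, v) \<in> trel (fin P) G"
    and fin: "\<And>w. w \<in> G \<Longrightarrow> finite (fsupp w)"
    and gP: "\<And>p. p \<in> P \<Longrightarrow> g p \<in> fin S"
    and gen: "\<And>w. w \<in> G \<Longrightarrow> lin_ext w g \<in> fspan G'"
  shows "(lin_ext u g, lin_ext v g) \<in> trel (fin S) G'"
proof -
  have u: "u \<in> fin P" and v: "v \<in> fin P" using uv by (auto simp: trel_def)
  have 1: "lin_ext u g \<in> fin S" "lin_ext v g \<in> fin S"
    using u v by (auto intro!: lin_ext_fin gP dest: fin_sub simp: fin_finite)
  have "fdiff (lin_ext u g) (lin_ext v g) = lin_ext (fdiff u v) g"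
    using u v by (simp add: lin_ext_fdiff fin_finite)
  moreover have "\<dots> \<in> fspan G'" using uv by (intro fspan_map[OF fin gen]) (auto simp: trel_def)
  ultimately show ?thesis using 1 by (simp add: trel_def)
qed

lemma fin_fdelta_fin: shows "finite (fsupp (fdelta p :: 'p \<Rightarrow> 'k::comm_ring_1))"
proof -
  have "fsupp (fdelta p :: 'p \<Rightarrow> 'k::comm_ring_1) \<subseteq> {p}" by (auto simp: fsupp_def fdelta_def)
  then show ?thesis by (rule finite_subset) simp
qed

lemma fin_fadd_fin: fixes u :: "'p \<Rightarrow> 'k::comm_ring_1" shows "finite (fsupp u) \<Longrightarrow> finite (fsupp v) \<Longrightarrow> finite (fsupp (fadd u v))"
proof -
  have "fsupp (fadd u v) \<subseteq> fsupp u \<union> fsupp v" by (auto simp: fsupp_def fadd_def)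
  then show "finite (fsupp u) \<Longrightarrow> finite (fsupp v) \<Longrightarrow> finite (fsupp (fadd u v))" by (auto intro: finite_subset)
qed

lemma fin_fscale_fin: fixes u :: "'p \<Rightarrow> 'k::comm_ring_1" shows "finite (fsupp u) \<Longrightarrow> finite (fsupp (fscale c u))"
proof -
  have "fsupp (fscale c u) \<subseteq> fsupp u" by (auto simp: fsupp_def fscale_def)
  then show "finite (fsupp u) \<Longrightarrow> finite (fsupp (fscale c u))" by (auto intro: finite_subset)
qed

lemma fin_fdiff_fin: fixes u :: "'p \<Rightarrow> 'k::comm_ring_1" shows "finite (fsupp u) \<Longrightarrow> finite (fsupp v) \<Longrightarrow> finite (fsupp (fdiff u v))"
proof -
  have "fsupp (fdiff u v) \<subseteq> fsupp u \<union> fsupp v" by (auto simp: fsupp_def fdiff_def)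
  then show "finite (fsupp u) \<Longrightarrow> finite (fsupp v) \<Longrightarrow> finite (fsupp (fdiff u v))" by (auto intro: finite_subset)
qed

lemmas fin_simps = fin_fdelta_fin fin_fadd_fin fin_fscale_fin fin_fdiff_fin

lemma gen_add: "(g p, fadd (g q) (g r)) \<in> trel D G' \<Longrightarrow>
   lin_ext (fdiff (fdelta p) (fadd (fdelta q) (fdelta r))) g \<in> fspan G'"
  by (simp add: lin_ext_fdiff lin_ext_fadd lin_ext_fdelta fin_simps trel_def)

lemma gen_scale: "(g p, fscale c (g q)) \<in> trel D G' \<Longrightarrow>
   lin_ext (fdiff (fdelta p) (fscale c (fdelta q))) g \<in> fspan G'"
  by (simp add: lin_ext_fdiff lin_ext_fscale lin_ext_fdelta fin_simps trel_def)

lemma gen_bal: "(g p, g q) \<in> trel D G' \<Longrightarrow>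
   lin_ext (fdiff (fdelta p) (fdelta q)) g \<in> fspan G'"
  by (simp add: lin_ext_fdiff lin_ext_fdelta fin_simps trel_def)

lemma gens2_finite: "w \<in> gens2 sa sb M N \<Longrightarrow> finite (fsupp w)"
  unfolding gens2_def by (auto simp: fin_simps)

lemma balgens_finite: "w \<in> balgens m B M N \<Longrightarrow> finite (fsupp w)"
  unfolding balgens_def by (auto simp: fin_simps)

lemma gens2_resp:
  assumes
    "\<And>a a' b. a \<in> M \<Longrightarrow> a' \<in> M \<Longrightarrow> b \<in> N \<Longrightarrow> (g (a + a', b), fadd (g (a, b)) (g (a', b))) \<in> trel D G'"
    "\<And>a b b'. a \<in> M \<Longrightarrow> b \<in> N \<Longrightarrow> b' \<in> N \<Longrightarrow> (g (a, b + b'), fadd (g (a, b)) (g (a, b'))) \<in> trel D G'"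
    "\<And>c a b. a \<in> M \<Longrightarrow> b \<in> N \<Longrightarrow> (g (sa c a, b), fscale c (g (a, b))) \<in> trel D G'"
    "\<And>c a b. a \<in> M \<Longrightarrow> b \<in> N \<Longrightarrow> (g (a, sb c b), fscale c (g (a, b))) \<in> trel D G'"
    "w \<in> gens2 sa sb M N"
  shows "lin_ext w g \<in> fspan G'"
  using assms(5) unfolding gens2_def
  apply (elim UnE; clarify)
  apply (rule gen_add; rule assms(1); assumption)
  apply (rule gen_add; rule assms(2); assumption)
  apply (rule gen_scale; rule assms(3); assumption)
  apply (rule gen_scale; rule assms(4); assumption)
  done

lemma balgens_resp:
  assumes "\<And>a \<beta> a'. a \<in> M \<Longrightarrow> \<beta> \<in> B \<Longrightarrow> a' \<in> N \<Longrightarrow> (g (m a \<beta>, a'), g (a, m \<beta> a')) \<in> trel D G'"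
    "w \<in> balgens m B M N"
  shows "lin_ext w g \<in> fspan G'"
  using assms(2) unfolding balgens_def
  apply clarify
  apply (rule gen_bal; rule assms(1); assumption)
  done

section \<open>quotient maps\<close>

lemma qmap_class:
  assumes r: "equiv D r" and r': "equiv D' r'"
    and resp: "\<And>u v. (u, v) \<in> r \<Longrightarrow> (f u, f v) \<in> r'" and u: "u \<in> D"
  shows "qmap f r' (r `` {u}) = r' `` {f u}"
proof -
  have "\<And>v. v \<in> r `` {u} \<Longrightarrow> r' `` {f v} = r' `` {f u}"
  proof -
    fix v assume "v \<in> r `` {u}"
    then have "(u, v) \<in> r" by simp
    then have "(f u, f v) \<in> r'" by (rule resp)
    then have "r' `` {f u} = r' `` {f v}" by (rule equiv_class_eq[OF r'])
    then show "r' `` {f v} = r' `` {f u}" by simp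
  qed
  note cl = this
  have uu: "u \<in> r `` {u}" by (rule equiv_class_self[OF r u])
  show ?thesis unfolding qmap_def
  proof (rule set_eqI, rule iffI)
    fix x assume "x \<in> r' `` (f ` (r `` {u}))"
    then obtain v where v: "v \<in> r `` {u}" "(f v, x) \<in> r'" by blast
    then have "x \<in> r' `` {f v}" by simp
    then show "x \<in> r' `` {f u}" using cl[OF v(1)] by simp
  next
    fix x assume "x \<in> r' `` {f u}"
    then have "(f u, x) \<in> r'" by simp
    moreover have "f u \<in> f ` (r `` {u})" using uu by (rule imageI)
    ultimately show "x \<in> r' `` (f ` (r `` {u}))" by (rule ImageI)
  qed
qed

lemma qmap_bij:
  assumes r: "equiv D r" and r': "equiv D' r'"
    and resp: "\<And>u v. (u, v) \<in> r \<Longrightarrow> (f u, f v) \<in> r'"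
    and resp': "\<And>u v. (u, v) \<in> r' \<Longrightarrow> (f' u, f' v) \<in> r"
    and inv1: "\<And>u. u \<in> D \<Longrightarrow> (f' (f u), u) \<in> r"
    and inv2: "\<And>v. v \<in> D' \<Longrightarrow> (f (f' v), v) \<in> r'"
  shows "bij_betw (qmap f r') (D // r) (D' // r')"
proof -
  have fD: "\<And>u. u \<in> D \<Longrightarrow> f u \<in> D'"
  proof -
    fix u assume "u \<in> D"
    then have "(u, u) \<in> r" using r by (simp add: equiv_def refl_on_def)
    then have "(f u, f u) \<in> r'" by (rule resp)
    then show "f u \<in> D'" using r' by (auto simp: equiv_def refl_on_def)
  qed
  have f'D: "\<And>u. u \<in> D' \<Longrightarrow> f' u \<in> D"
  proof -
    fix u assume "u \<in> D'"
    then have "(u, u) \<in> r'" using r' by (simp add: equiv_def refl_on_def)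
    then have "(f' u, f' u) \<in> r" by (rule resp')
    then show "f' u \<in> D" using r by (auto simp: equiv_def refl_on_def)
  qed
  show ?thesis
  proof (rule bij_betwI')
    fix C C' assume C: "C \<in> D // r" and C': "C' \<in> D // r"
    obtain u where u: "u \<in> D" "C = r `` {u}" using C by (auto elim: quotientE)
    obtain v where v: "v \<in> D" "C' = r `` {v}" using C' by (auto elim: quotientE)
    show "(qmap f r' C = qmap f r' C') = (C = C')"
    proof
      assume "qmap f r' C = qmap f r' C'"
      then have "r' `` {f u} = r' `` {f v}" using u v qmap_class[OF r r' resp] by simp
      then have "(f u, f v) \<in> r'" by (rule eq_equiv_class[OF _ r' fD[OF v(1)]])
      then have "(f' (f u), f' (f v)) \<in> r" by (rule resp')
      then have "(u, v) \<in> r" using inv1[OF u(1)] inv1[OF v(1)] r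
        by (meson equiv_def symD transD)
      then show "C = C'" using u v r by (simp add: equiv_class_eq)
    qed simp
  next
    fix C assume "C \<in> D // r"
    then obtain u where u: "u \<in> D" "C = r `` {u}" by (auto elim: quotientE)
    then show "qmap f r' C \<in> D' // r'" using qmap_class[OF r r' resp] fD by (simp add: quotientI)
  next
    fix C' assume "C' \<in> D' // r'"
    then obtain v where v: "v \<in> D'" "C' = r' `` {v}" by (auto elim: quotientE)
    have "qmap f r' (r `` {f' v}) = r' `` {f (f' v)}" using qmap_class[OF r r' resp] f'D v by simp
    also have "\<dots> = C'" using inv2[OF v(1)] r' v by (simp add: equiv_class_eq)
    finally show "\<exists>C\<in>D // r. C' = qmap f r' C" using f'D v by (metis quotientI)
  qed
qed

lemma qmap_inj_rel:
  assumes r: "equiv D r" and r': "equiv D' r'"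
    and resp: "\<And>u v. (u, v) \<in> r \<Longrightarrow> (f u, f v) \<in> r'"
    and inj: "inj_on (qmap f r') (D // r)"
    and u: "u \<in> D" and v: "v \<in> D" and fuv: "(f u, f v) \<in> r'"
  shows "(u, v) \<in> r"
proof -
  have "qmap f r' (r `` {u}) = qmap f r' (r `` {v})"
    using qmap_class[OF r r' resp] u v fuv r' by (simp add: equiv_class_eq)
  then have "r `` {u} = r `` {v}" using inj u v by (auto dest: inj_onD intro: quotientI)
  then show ?thesis by (rule eq_equiv_class[OF _ r v])
qed

lemma qmap_surj_rel:
  assumes r: "equiv D r" and r': "equiv D' r'"
    and resp: "\<And>u v. (u, v) \<in> r \<Longrightarrow> (f u, f v) \<in> r'"
    and surj: "qmap f r' ` (D // r) = D' // r'"
    and v: "v \<in> D'"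
  shows "\<exists>u\<in>D. (f u, v) \<in> r'"
proof -
  have "r' `` {v} \<in> D' // r'" using v by (rule quotientI)
  then have "r' `` {v} \<in> qmap f r' ` (D // r)" using surj by simp
  then obtain C where C: "C \<in> D // r" "r' `` {v} = qmap f r' C" by (rule imageE) simp
  then obtain u where u: "u \<in> D" "C = r `` {u}" by (auto elim: quotientE)
  then have "r' `` {v} = r' `` {f u}" using C qmap_class[OF r r' resp] by simp
  then have "(f u, v) \<in> r'" by (rule eq_equiv_class[OF sym r' v])
  then show ?thesis using u by blast
qed

lemma left_inv_inj: "(\<exists>g. \<forall>C\<in>S. g (f C) = C) \<Longrightarrow> inj_on f S"
  by (metis inj_onI)

lemma lin_ext_finite:
  assumes "finite (fsupp u)" "\<And>p. p \<in> fsupp u \<Longrightarrow> finite (fsupp (g p))"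
  shows "finite (fsupp (lin_ext u g))"
  using fsupp_lin_ext[of u g] assms by (auto intro: finite_subset)

lemma krel2_eq: "krel2 sa sb M N = trel (fin (M \<times> N)) (gens2 sa sb M N)"
  by (simp add: krel2_def free2_fin)

lemma brel_eq: "brel sa m B M N = trel (fin (M \<times> N)) (gens2 sa sa M N \<union> balgens m B M N)"
  by (simp add: brel_def free2_fin)

lemma gens2_mem1: "a \<in> M \<Longrightarrow> a' \<in> M \<Longrightarrow> b \<in> N \<Longrightarrow>
   fdiff (fdelta (a + a', b)) (fadd (fdelta (a, b)) (fdelta (a', b))) \<in> gens2 sa sb M N"
  unfolding gens2_def by blast
lemma gens2_mem2: "a \<in> M \<Longrightarrow> b \<in> N \<Longrightarrow> b' \<in> N \<Longrightarrow>
   fdiff (fdelta (a, b + b')) (fadd (fdelta (a, b)) (fdelta (a, b'))) \<in> gens2 sa sb M N"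
  unfolding gens2_def by blast
lemma gens2_mem3: "a \<in> M \<Longrightarrow> b \<in> N \<Longrightarrow>
   fdiff (fdelta (sa c a, b)) (fscale c (fdelta (a, b))) \<in> gens2 sa sb M N"
  unfolding gens2_def by blast
lemma gens2_mem4: "a \<in> M \<Longrightarrow> b \<in> N \<Longrightarrow>
   fdiff (fdelta (a, sb c b)) (fscale c (fdelta (a, b))) \<in> gens2 sa sb M N"
  unfolding gens2_def by blast
lemma balgens_mem: "a \<in> M \<Longrightarrow> \<beta> \<in> B \<Longrightarrow> a' \<in> N \<Longrightarrow>
   fdiff (fdelta (m a \<beta>, a')) (fdelta (a, m \<beta> a')) \<in> balgens m B M N"
  unfolding balgens_def by blast

lemma krel2_g1: "a \<in> M \<Longrightarrow> a' \<in> M \<Longrightarrow> b \<in> N \<Longrightarrow> a + a' \<in> M \<Longrightarrow>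
   (fdelta (a + a', b), fadd (fdelta (a, b)) (fdelta (a', b))) \<in> krel2 sa sb M N"
  unfolding krel2_eq by (intro trel_gen fin_fdelta fin_fadd gens2_mem1) auto
lemma krel2_g2: "a \<in> M \<Longrightarrow> b \<in> N \<Longrightarrow> b' \<in> N \<Longrightarrow> b + b' \<in> N \<Longrightarrow>
   (fdelta (a, b + b'), fadd (fdelta (a, b)) (fdelta (a, b'))) \<in> krel2 sa sb M N"
  unfolding krel2_eq by (intro trel_gen fin_fdelta fin_fadd gens2_mem2) auto
lemma krel2_g3: "a \<in> M \<Longrightarrow> b \<in> N \<Longrightarrow> sa c a \<in> M \<Longrightarrow>
   (fdelta (sa c a, b), fscale c (fdelta (a, b))) \<in> krel2 sa sb M N"
  unfolding krel2_eq by (intro trel_gen fin_fdelta fin_fscale gens2_mem3) auto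
lemma krel2_g4: "a \<in> M \<Longrightarrow> b \<in> N \<Longrightarrow> sb c b \<in> N \<Longrightarrow>
   (fdelta (a, sb c b), fscale c (fdelta (a, b))) \<in> krel2 sa sb M N"
  unfolding krel2_eq by (intro trel_gen fin_fdelta fin_fscale gens2_mem4) auto

lemma brel_g1: "a \<in> M \<Longrightarrow> a' \<in> M \<Longrightarrow> b \<in> N \<Longrightarrow> a + a' \<in> M \<Longrightarrow>
   (fdelta (a + a', b), fadd (fdelta (a, b)) (fdelta (a', b))) \<in> brel sa m B M N"
  unfolding brel_eq by (intro trel_gen fin_fdelta fin_fadd UnI1 gens2_mem1) auto
lemma brel_g2: "a \<in> M \<Longrightarrow> b \<in> N \<Longrightarrow> b' \<in> N \<Longrightarrow> b + b' \<in> N \<Longrightarrow>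
   (fdelta (a, b + b'), fadd (fdelta (a, b)) (fdelta (a, b'))) \<in> brel sa m B M N"
  unfolding brel_eq by (intro trel_gen fin_fdelta fin_fadd UnI1 gens2_mem2) auto
lemma brel_g3: "a \<in> M \<Longrightarrow> b \<in> N \<Longrightarrow> sa c a \<in> M \<Longrightarrow>
   (fdelta (sa c a, b), fscale c (fdelta (a, b))) \<in> brel sa m B M N"
  unfolding brel_eq by (intro trel_gen fin_fdelta fin_fscale UnI1 gens2_mem3) auto
lemma brel_g4: "a \<in> M \<Longrightarrow> b \<in> N \<Longrightarrow> sa c b \<in> N \<Longrightarrow>
   (fdelta (a, sa c b), fscale c (fdelta (a, b))) \<in> brel sa m B M N"
  unfolding brel_eq by (intro trel_gen fin_fdelta fin_fscale UnI1 gens2_mem4) auto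
lemma brel_g5: "a \<in> M \<Longrightarrow> \<beta> \<in> B \<Longrightarrow> a' \<in> N \<Longrightarrow> m a \<beta> \<in> M \<Longrightarrow> m \<beta> a' \<in> N \<Longrightarrow>
   (fdelta (m a \<beta>, a'), fdelta (a, m \<beta> a')) \<in> brel sa m B M N"
  unfolding brel_eq by (intro trel_gen fin_fdelta UnI2 balgens_mem) auto

lemma krel2_map:
  assumes uv: "(u, v) \<in> krel2 sa sb M N"
    and gP: "\<And>a b. a \<in> M \<Longrightarrow> b \<in> N \<Longrightarrow> g (a, b) \<in> fin S"
    and c1: "\<And>a a' b. a \<in> M \<Longrightarrow> a' \<in> M \<Longrightarrow> b \<in> N \<Longrightarrow> (g (a + a', b), fadd (g (a, b)) (g (a', b))) \<in> trel (fin S) G'"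
    and c2: "\<And>a b b'. a \<in> M \<Longrightarrow> b \<in> N \<Longrightarrow> b' \<in> N \<Longrightarrow> (g (a, b + b'), fadd (g (a, b)) (g (a, b'))) \<in> trel (fin S) G'"
    and c3: "\<And>c a b. a \<in> M \<Longrightarrow> b \<in> N \<Longrightarrow> (g (sa c a, b), fscale c (g (a, b))) \<in> trel (fin S) G'"
    and c4: "\<And>c a b. a \<in> M \<Longrightarrow> b \<in> N \<Longrightarrow> (g (a, sb c b), fscale c (g (a, b))) \<in> trel (fin S) G'"
  shows "(lin_ext u g, lin_ext v g) \<in> trel (fin S) G'"
proof (rule trel_map)
  show "(u, v) \<in> trel (fin (M \<times> N)) (gens2 sa sb M N)" using uv by (simp add: krel2_eq)
  show "\<And>w. w \<in> gens2 sa sb M N \<Longrightarrow> finite (fsupp w)" by (rule gens2_finite)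
  show "\<And>p. p \<in> M \<times> N \<Longrightarrow> g p \<in> fin S" using gP by auto
  show "\<And>w. w \<in> gens2 sa sb M N \<Longrightarrow> lin_ext w g \<in> fspan G'"
    by (rule gens2_resp[OF c1 c2 c3 c4])
qed

lemma brel_map:
  assumes uv: "(u, v) \<in> brel sa m B M N"
    and gP: "\<And>a b. a \<in> M \<Longrightarrow> b \<in> N \<Longrightarrow> g (a, b) \<in> fin S"
    and c1: "\<And>a a' b. a \<in> M \<Longrightarrow> a' \<in> M \<Longrightarrow> b \<in> N \<Longrightarrow> (g (a + a', b), fadd (g (a, b)) (g (a', b))) \<in> trel (fin S) G'"
    and c2: "\<And>a b b'. a \<in> M \<Longrightarrow> b \<in> N \<Longrightarrow> b' \<in> N \<Longrightarrow> (g (a, b + b'), fadd (g (a, b)) (g (a, b'))) \<in> trel (fin S) G'"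
    and c3: "\<And>c a b. a \<in> M \<Longrightarrow> b \<in> N \<Longrightarrow> (g (sa c a, b), fscale c (g (a, b))) \<in> trel (fin S) G'"
    and c4: "\<And>c a b. a \<in> M \<Longrightarrow> b \<in> N \<Longrightarrow> (g (a, sa c b), fscale c (g (a, b))) \<in> trel (fin S) G'"
    and c5: "\<And>a \<beta> a'. a \<in> M \<Longrightarrow> \<beta> \<in> B \<Longrightarrow> a' \<in> N \<Longrightarrow> (g (m a \<beta>, a'), g (a, m \<beta> a')) \<in> trel (fin S) G'"
  shows "(lin_ext u g, lin_ext v g) \<in> trel (fin S) G'"
proof (rule trel_map)
  show "(u, v) \<in> trel (fin (M \<times> N)) (gens2 sa sa M N \<union> balgens m B M N)" using uv by (simp add: brel_eq)
  show "\<And>w. w \<in> gens2 sa sa M N \<union> balgens m B M N \<Longrightarrow> finite (fsupp w)"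
    using gens2_finite balgens_finite by (auto simp only: Un_iff)
  show "\<And>p. p \<in> M \<times> N \<Longrightarrow> g p \<in> fin S" using gP by auto
  show "\<And>w. w \<in> gens2 sa sa M N \<union> balgens m B M N \<Longrightarrow> lin_ext w g \<in> fspan G'"
  proof -
    fix w assume "w \<in> gens2 sa sa M N \<union> balgens m B M N"
    then show "lin_ext w g \<in> fspan G'"
    proof
      assume w: "w \<in> gens2 sa sa M N" show ?thesis
        apply (rule gens2_resp[where w=w])
        apply (erule (2) c1)
        apply (erule (2) c2)
        apply (erule (1) c3)
        apply (erule (1) c4)
        by (rule w)
    next
      assume w: "w \<in> balgens m B M N" show ?thesis
        apply (rule balgens_resp[where w=w and m=m and B=B and M=M and N=N])
        apply (erule (2) c5)
        by (rule w)
    qed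
  qed
qed

lemma prod_krel:
  assumes uv: "(u, v) \<in> krel2 sa sb M N"
    and \<phi>M: "\<And>a. a \<in> M \<Longrightarrow> \<phi> a \<in> M'" and \<psi>N: "\<And>b. b \<in> N \<Longrightarrow> \<psi> b \<in> N'"
    and \<phi>a: "\<And>a a'. a \<in> M \<Longrightarrow> a' \<in> M \<Longrightarrow> \<phi> (a + a') = \<phi> a + \<phi> a'"
    and \<phi>s: "\<And>c a. a \<in> M \<Longrightarrow> \<phi> (sa c a) = sa' c (\<phi> a)"
    and \<psi>a: "\<And>b b'. b \<in> N \<Longrightarrow> b' \<in> N \<Longrightarrow> \<psi> (b + b') = \<psi> b + \<psi> b'"
    and \<psi>s: "\<And>c b. b \<in> N \<Longrightarrow> \<psi> (sb c b) = sb' c (\<psi> b)"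
    and M'a: "\<And>a a'. a \<in> M' \<Longrightarrow> a' \<in> M' \<Longrightarrow> a + a' \<in> M'"
    and M's: "\<And>c a. a \<in> M' \<Longrightarrow> sa' c a \<in> M'"
    and N'a: "\<And>b b'. b \<in> N' \<Longrightarrow> b' \<in> N' \<Longrightarrow> b + b' \<in> N'"
    and N's: "\<And>c b. b \<in> N' \<Longrightarrow> sb' c b \<in> N'"
  shows "(lin_ext u (\<lambda>(a, b). fdelta (\<phi> a, \<psi> b)), lin_ext v (\<lambda>(a, b). fdelta (\<phi> a, \<psi> b)))
          \<in> krel2 sa' sb' M' N'"
  unfolding krel2_eq[of sa' sb' M' N']
proof (rule krel2_map[OF uv])
  fix a b assume "a \<in> M" "b \<in> N"
  then show "(case (a, b) of (a, b) \<Rightarrow> fdelta (\<phi> a, \<psi> b)) \<in> fin (M' \<times> N')"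
    by (simp add: fin_fdelta \<phi>M \<psi>N)
next
  fix a a' b assume h: "a \<in> M" "a' \<in> M" "b \<in> N"
  then show "((case (a + a', b) of (a, b) \<Rightarrow> fdelta (\<phi> a, \<psi> b)),
     fadd (case (a, b) of (a, b) \<Rightarrow> fdelta (\<phi> a, \<psi> b)) (case (a', b) of (a, b) \<Rightarrow> fdelta (\<phi> a, \<psi> b)))
    \<in> trel (fin (M' \<times> N')) (gens2 sa' sb' M' N')"
    using krel2_g1[of "\<phi> a" M' "\<phi> a'" "\<psi> b" N' sa' sb'] by (simp add: \<phi>a \<phi>M \<psi>N M'a krel2_eq)
next
  fix a b b' assume h: "a \<in> M" "b \<in> N" "b' \<in> N"
  then show "((case (a, b + b') of (a, b) \<Rightarrow> fdelta (\<phi> a, \<psi> b)),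
     fadd (case (a, b) of (a, b) \<Rightarrow> fdelta (\<phi> a, \<psi> b)) (case (a, b') of (a, b) \<Rightarrow> fdelta (\<phi> a, \<psi> b)))
    \<in> trel (fin (M' \<times> N')) (gens2 sa' sb' M' N')"
    using krel2_g2[of "\<phi> a" M' "\<psi> b" N' "\<psi> b'" sa' sb'] by (simp add: \<psi>a \<phi>M \<psi>N N'a krel2_eq)
next
  fix c a b assume h: "a \<in> M" "b \<in> N"
  then show "((case (sa c a, b) of (a, b) \<Rightarrow> fdelta (\<phi> a, \<psi> b)),
     fscale c (case (a, b) of (a, b) \<Rightarrow> fdelta (\<phi> a, \<psi> b)))
    \<in> trel (fin (M' \<times> N')) (gens2 sa' sb' M' N')"
    using krel2_g3[of "\<phi> a" M' "\<psi> b" N' sa' c sb'] by (simp add: \<phi>s \<phi>M \<psi>N M's krel2_eq)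
next
  fix c a b assume h: "a \<in> M" "b \<in> N"
  then show "((case (a, sb c b) of (a, b) \<Rightarrow> fdelta (\<phi> a, \<psi> b)),
     fscale c (case (a, b) of (a, b) \<Rightarrow> fdelta (\<phi> a, \<psi> b)))
    \<in> trel (fin (M' \<times> N')) (gens2 sa' sb' M' N')"
    using krel2_g4[of "\<phi> a" M' "\<psi> b" N' sb' c sa'] by (simp add: \<psi>s \<phi>M \<psi>N N's krel2_eq)
qed

definition R :: "('a \<Rightarrow> 'a \<Rightarrow> 'a) \<Rightarrow> 'a \<Rightarrow> ('a \<times> 'h \<Rightarrow> 'k::comm_ring_1) \<Rightarrow> ('a \<times> 'h \<Rightarrow> 'k)" where
  "R m b u = lin_ext u (\<lambda>(c, h). fdelta (m c b, h))"

definition R2 :: "('a \<Rightarrow> 'a \<Rightarrow> 'a) \<Rightarrow> 'a \<Rightarrow> ('a \<times> 'a \<Rightarrow> 'k::comm_ring_1) \<Rightarrow> ('a \<times> 'a \<Rightarrow> 'k)" where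
  "R2 m b u = lin_ext u (\<lambda>(l, r). fdelta (l, m r b))"

lemma lin_ext_cong_pair:
  "(\<And>a b. (a, b) \<in> fsupp u \<Longrightarrow> g (a, b) = g' (a, b)) \<Longrightarrow> lin_ext u g = lin_ext u g'"
  apply (rule lin_ext_cong)
  subgoal for p by (cases p) auto
  done

lemma trel_lin_cong_pair:
  "finite (fsupp u) \<Longrightarrow> (\<And>a b. (a, b) \<in> fsupp u \<Longrightarrow> (g (a, b), g' (a, b)) \<in> trel (fin S) G)
   \<Longrightarrow> (lin_ext u g, lin_ext u g') \<in> trel (fin S) G"
  apply (rule trel_lin_cong)
   apply assumption
  subgoal for p by (cases p) auto
  done

lemma fin_pair: "u \<in> fin (M \<times> N) \<Longrightarrow> (a, b) \<in> fsupp u \<Longrightarrow> a \<in> M \<and> b \<in> N"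
  by (auto simp: fin_def)

lemma lin_ext_fin_pair:
  assumes "u \<in> fin (M \<times> N)" "\<And>a b. a \<in> M \<Longrightarrow> b \<in> N \<Longrightarrow> g (a, b) \<in> fin S"
  shows "lin_ext u g \<in> fin S"
  apply (rule lin_ext_fin[OF fin_finite[OF assms(1)]])
  subgoal for p by (cases p) (auto dest: fin_pair[OF assms(1)] intro: assms(2))
  done

lemma lin_ext_assoc_fin:
  assumes "u \<in> fin S" "\<And>p. p \<in> S \<Longrightarrow> f p \<in> fin T"
  shows "lin_ext (lin_ext u f) g = lin_ext u (\<lambda>p. lin_ext (f p) g)"
  apply (rule lin_ext_assoc)
   apply (rule fin_finite[OF assms(1)])
  apply (rule fin_finite[OF assms(2)])
  apply (erule fin_sub[OF assms(1)])
  done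

lemma R_fdelta: "R m b (fdelta (c, h)) = fdelta (m c b, h)"
  by (simp add: R_def lin_ext_fdelta)

lemma R2_fdelta: "R2 m b (fdelta (l, r)) = fdelta (l, m r b)"
  by (simp add: R2_def lin_ext_fdelta)

lemma R_fadd: "finite (fsupp u) \<Longrightarrow> finite (fsupp v) \<Longrightarrow> R m b (fadd u v) = fadd (R m b u) (R m b v)"
  by (simp add: R_def lin_ext_fadd)
lemma R_fscale: "finite (fsupp u) \<Longrightarrow> R m b (fscale c u) = fscale c (R m b u)"
  by (simp add: R_def lin_ext_fscale)
lemma R2_fadd: "finite (fsupp u) \<Longrightarrow> finite (fsupp v) \<Longrightarrow> R2 m b (fadd u v) = fadd (R2 m b u) (R2 m b v)"
  by (simp add: R2_def lin_ext_fadd)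
lemma R2_fscale: "finite (fsupp u) \<Longrightarrow> R2 m b (fscale c u) = fscale c (R2 m b u)"
  by (simp add: R2_def lin_ext_fscale)

lemmas gen_rels = krel2_g1 krel2_g2 krel2_g3 krel2_g4 brel_g1 brel_g2 brel_g3 brel_g4 brel_g5

locale galc =
  fixes X :: "'x set"
    and sh :: "'k::comm_ring_1 \<Rightarrow> 'h::ab_group_add \<Rightarrow> 'h"
    and H :: "'x \<Rightarrow> 'x \<Rightarrow> 'h set" and mh :: "'h \<Rightarrow> 'h \<Rightarrow> 'h" and uh :: "'x \<Rightarrow> 'h"
    and sa :: "'k \<Rightarrow> 'a::ab_group_add \<Rightarrow> 'a"
    and A :: "'x \<Rightarrow> 'x \<Rightarrow> 'a set" and ma :: "'a \<Rightarrow> 'a \<Rightarrow> 'a" and ua :: "'x \<Rightarrow> 'a"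
    and rho :: "'x \<Rightarrow> 'x \<Rightarrow> 'a \<Rightarrow> ('a \<times> 'h \<Rightarrow> 'k)"
    and B :: "'x \<Rightarrow> 'a set"
  assumes A_add: "\<lbrakk>x \<in> X; y \<in> X; a \<in> A x y; b \<in> A x y\<rbrakk> \<Longrightarrow> a + b \<in> A x y"
    and A_sc: "\<lbrakk>x \<in> X; y \<in> X; a \<in> A x y\<rbrakk> \<Longrightarrow> sa c a \<in> A x y"
    and A_m: "\<lbrakk>x \<in> X; y \<in> X; z \<in> X; a \<in> A x y; b \<in> A y z\<rbrakk> \<Longrightarrow> ma a b \<in> A x z"
    and A_addL: "\<lbrakk>x \<in> X; y \<in> X; z \<in> X; a \<in> A x y; a' \<in> A x y; b \<in> A y z\<rbrakk> \<Longrightarrow> ma (a + a') b = ma a b + ma a' b"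
    and A_addR: "\<lbrakk>x \<in> X; y \<in> X; z \<in> X; a \<in> A x y; b \<in> A y z; b' \<in> A y z\<rbrakk> \<Longrightarrow> ma a (b + b') = ma a b + ma a b'"
    and A_scL: "\<lbrakk>x \<in> X; y \<in> X; z \<in> X; a \<in> A x y; b \<in> A y z\<rbrakk> \<Longrightarrow> ma (sa c a) b = sa c (ma a b)"
    and A_scR: "\<lbrakk>x \<in> X; y \<in> X; z \<in> X; a \<in> A x y; b \<in> A y z\<rbrakk> \<Longrightarrow> ma a (sa c b) = sa c (ma a b)"
    and A_assoc: "\<lbrakk>w \<in> X; x \<in> X; y \<in> X; z \<in> X; a \<in> A w x; b \<in> A x y; d \<in> A y z\<rbrakk> \<Longrightarrow> ma (ma a b) d = ma a (ma b d)"
    and A_u: "x \<in> X \<Longrightarrow> ua x \<in> A x x"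
    and A_uL: "\<lbrakk>x \<in> X; y \<in> X; a \<in> A x y\<rbrakk> \<Longrightarrow> ma (ua x) a = a"
    and A_uR: "\<lbrakk>x \<in> X; y \<in> X; a \<in> A x y\<rbrakk> \<Longrightarrow> ma a (ua y) = a"
    and H_add: "\<lbrakk>x \<in> X; y \<in> X; h \<in> H x y; g \<in> H x y\<rbrakk> \<Longrightarrow> h + g \<in> H x y"
    and H_sc: "\<lbrakk>x \<in> X; y \<in> X; h \<in> H x y\<rbrakk> \<Longrightarrow> sh c h \<in> H x y"
    and H_m: "\<lbrakk>x \<in> X; y \<in> X; z \<in> X; h \<in> H x y; g \<in> H y z\<rbrakk> \<Longrightarrow> mh h g \<in> H x z"
    and H_addR: "\<lbrakk>x \<in> X; y \<in> X; z \<in> X; h \<in> H x y; g \<in> H y z; g2 \<in> H y z\<rbrakk> \<Longrightarrow> mh h (g + g2) = mh h g + mh h g2"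
    and H_scR: "\<lbrakk>x \<in> X; y \<in> X; z \<in> X; h \<in> H x y; g \<in> H y z\<rbrakk> \<Longrightarrow> mh h (sh c g) = sh c (mh h g)"
    and H_u: "x \<in> X \<Longrightarrow> uh x \<in> H x x"
    and H_uR: "\<lbrakk>x \<in> X; y \<in> X; h \<in> H x y\<rbrakk> \<Longrightarrow> mh h (uh y) = h"
    and rho_in: "\<lbrakk>x \<in> X; y \<in> X; a \<in> A x y\<rbrakk> \<Longrightarrow> rho x y a \<in> fin (A x y \<times> H x y)"
    and rho_add: "\<lbrakk>x \<in> X; y \<in> X; a \<in> A x y; a' \<in> A x y\<rbrakk> \<Longrightarrow>
       (rho x y (a + a'), fadd (rho x y a) (rho x y a')) \<in> krel2 sa sh (A x y) (H x y)"
    and rho_sc: "\<lbrakk>x \<in> X; y \<in> X; a \<in> A x y\<rbrakk> \<Longrightarrow>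
       (rho x y (sa c a), fscale c (rho x y a)) \<in> krel2 sa sh (A x y) (H x y)"
    and rho_m: "\<lbrakk>x \<in> X; y \<in> X; z \<in> X; a \<in> A x y; b \<in> A y z\<rbrakk> \<Longrightarrow>
       (rho x z (ma a b), lin_ext (rho x y a) (\<lambda>(a0, h). lin_ext (rho y z b) (\<lambda>(b0, g). fdelta (ma a0 b0, mh h g))))
       \<in> krel2 sa sh (A x z) (H x z)"
    and B_A: "\<lbrakk>x \<in> X; \<beta> \<in> B x\<rbrakk> \<Longrightarrow> \<beta> \<in> A x x"
    and B_rho: "\<lbrakk>x \<in> X; \<beta> \<in> B x\<rbrakk> \<Longrightarrow> (rho x x \<beta>, fdelta (\<beta>, uh x)) \<in> krel2 sa sh (A x x) (H x x)"
begin

lemma rho_fin: "\<lbrakk>x \<in> X; y \<in> X; a \<in> A x y\<rbrakk> \<Longrightarrow> finite (fsupp (rho x y a))"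
  using rho_in fin_finite by blast

lemma R_fin:
  assumes "w \<in> X" "y \<in> X" "z \<in> X" "u \<in> fin (A z w \<times> H z x)" "b \<in> A w y"
  shows "R ma b u \<in> fin (A z y \<times> H z x)"
  unfolding R_def using assms by (intro lin_ext_fin_pair[OF assms(4)]) (auto intro!: fin_fdelta A_m)

lemma R_rel:
  assumes X: "w \<in> X" "y \<in> X" "z \<in> X" "x \<in> X" and b: "b \<in> A w y"
    and uv: "(u, v) \<in> krel2 sa sh (A z w) (H z x)"
  shows "(R ma b u, R ma b v) \<in> krel2 sa sh (A z y) (H z x)"
  unfolding R_def
  by (rule prod_krel[where \<phi>="\<lambda>c. ma c b" and \<psi>="\<lambda>h. h", OF uv])
     (use X b in \<open>auto intro: A_m A_addL A_scL A_add A_sc H_add H_sc\<close>)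

lemma R_add_right:
  assumes X: "w \<in> X" "y \<in> X" "z \<in> X" "x \<in> X" and u: "u \<in> fin (A z w \<times> H z x)"
    and b: "b \<in> A w y" "b' \<in> A w y"
  shows "(R ma (b + b') u, fadd (R ma b u) (R ma b' u)) \<in> krel2 sa sh (A z y) (H z x)"
proof -
  have "fadd (R ma b u) (R ma b' u) =
      lin_ext u (\<lambda>p. fadd ((\<lambda>(c, h). fdelta (ma c b, h)) p) ((\<lambda>(c, h). fdelta (ma c b', h)) p))"
    by (simp add: R_def lin_ext_fun_fadd)
  moreover have "(R ma (b + b') u,
      lin_ext u (\<lambda>p. fadd ((\<lambda>(c, h). fdelta (ma c b, h)) p) ((\<lambda>(c, h). fdelta (ma c b', h)) p)))
     \<in> krel2 sa sh (A z y) (H z x)"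
    unfolding R_def krel2_eq
  proof (rule trel_lin_cong_pair[OF fin_finite[OF u]])
    fix c h assume "(c, h) \<in> fsupp u"
    then have ch: "c \<in> A z w" "h \<in> H z x" using fin_pair[OF u] by auto
    show "((case (c, h) of (c, h) \<Rightarrow> fdelta (ma c (b + b'), h)),
        fadd (case (c, h) of (c, h) \<Rightarrow> fdelta (ma c b, h)) (case (c, h) of (c, h) \<Rightarrow> fdelta (ma c b', h)))
      \<in> trel (fin (A z y \<times> H z x)) (gens2 sa sh (A z y) (H z x))"
      using krel2_g1[of "ma c b" "A z y" "ma c b'" h "H z x" sa sh] ch X b
      by (simp add: A_addR A_m A_add krel2_eq)
  qed
  ultimately show ?thesis by simp
qed

lemma R_sc_right:
  assumes X: "w \<in> X" "y \<in> X" "z \<in> X" "x \<in> X" and u: "u \<in> fin (A z w \<times> H z x)"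
    and b: "b \<in> A w y"
  shows "(R ma (sa c b) u, fscale c (R ma b u)) \<in> krel2 sa sh (A z y) (H z x)"
proof -
  have "fscale c (R ma b u) = lin_ext u (\<lambda>p. fscale c ((\<lambda>(c, h). fdelta (ma c b, h)) p))"
    by (simp add: R_def lin_ext_fun_fscale)
  moreover have "(R ma (sa c b) u, lin_ext u (\<lambda>p. fscale c ((\<lambda>(c, h). fdelta (ma c b, h)) p)))
     \<in> krel2 sa sh (A z y) (H z x)"
    unfolding R_def krel2_eq
  proof (rule trel_lin_cong_pair[OF fin_finite[OF u]])
    fix c' h assume "(c', h) \<in> fsupp u"
    then have ch: "c' \<in> A z w" "h \<in> H z x" using fin_pair[OF u] by auto
    show "((case (c', h) of (c', h) \<Rightarrow> fdelta (ma c' (sa c b), h)),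
        fscale c (case (c', h) of (c', h) \<Rightarrow> fdelta (ma c' b, h)))
      \<in> trel (fin (A z y \<times> H z x)) (gens2 sa sh (A z y) (H z x))"
      using krel2_g3[of "ma c' b" "A z y" h "H z x" sa c sh] ch X b
      by (simp add: A_scR A_m A_sc krel2_eq)
  qed
  ultimately show ?thesis by simp
qed

lemma R_R:
  assumes X: "w \<in> X" "v \<in> X" "y \<in> X" "z \<in> X" and u: "u \<in> fin (A z w \<times> H z x)"
    and b: "b \<in> A w v" "b' \<in> A v y"
  shows "R ma b' (R ma b u) = R ma (ma b b') u"
proof -
  have "R ma b' (R ma b u) = lin_ext u (\<lambda>p. lin_ext ((\<lambda>(c, h). fdelta (ma c b, h)) p) (\<lambda>(c, h). fdelta (ma c b', h)))"
    unfolding R_def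
    by (rule lin_ext_assoc[OF fin_finite[OF u]]) (auto simp: fin_fdelta_fin split: prod.split)
  also have "\<dots> = R ma (ma b b') u"
    unfolding R_def
  proof (rule lin_ext_cong_pair)
    fix c h assume "(c, h) \<in> fsupp u"
    then have "c \<in> A z w" using fin_pair[OF u] by auto
    then show "(\<lambda>p. lin_ext ((\<lambda>(c, h). fdelta (ma c b, h)) p) (\<lambda>(c, h). fdelta (ma c b', h))) (c, h) =
       (\<lambda>(c, h). fdelta (ma c (ma b b'), h)) (c, h)"
      using X b by (simp add: lin_ext_fdelta A_assoc)
  qed
  finally show ?thesis .
qed

lemma R_unit:
  assumes X: "w \<in> X" "z \<in> X" and u: "u \<in> fin (A z w \<times> H z x)"
  shows "R ma (ua w) u = u"
proof -
  have "R ma (ua w) u = lin_ext u (\<lambda>(a, b). fdelta (a, b))"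
    unfolding R_def
  proof (rule lin_ext_cong_pair)
    fix c h assume "(c, h) \<in> fsupp u"
    then have "c \<in> A z w" using fin_pair[OF u] by auto
    then show "(\<lambda>(c, h). fdelta (ma c (ua w), h)) (c, h) = (\<lambda>(a, b). fdelta (a, b)) (c, h)"
      using X by (simp add: A_uR)
  qed
  also have "\<dots> = u" by (rule lin_ext_fdelta_id'[OF fin_finite[OF u]])
  finally show ?thesis .
qed

end

context galc
begin

lemma R2_fin:
  assumes "w \<in> X" "y \<in> X" "x \<in> X" "u \<in> fin (A z x \<times> A x w)" "b \<in> A w y"
  shows "R2 ma b u \<in> fin (A z x \<times> A x y)"
  unfolding R2_def using assms by (intro lin_ext_fin_pair[OF assms(4)]) (auto intro!: fin_fdelta A_m)

lemma R2_rel: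
  assumes X: "w \<in> X" "y \<in> X" "z \<in> X" "x \<in> X" and b: "b \<in> A w y"
    and uv: "(u, v) \<in> brel sa ma (B x) (A z x) (A x w)"
  shows "(R2 ma b u, R2 ma b v) \<in> brel sa ma (B x) (A z x) (A x y)"
  unfolding R2_def brel_eq[of sa ma "B x" "A z x" "A x y"]
  apply (rule brel_map[OF uv])
  subgoal for l r using X b by (simp add: fin_fdelta A_m)
  subgoal for l l' r using X b brel_g1[of l "A z x" l' "ma r b" "A x y" sa ma "B x"]
    by (simp add: A_m A_add brel_eq)
  subgoal for l r r' using X b brel_g2[of l "A z x" "ma r b" "A x y" "ma r' b" sa ma "B x"]
    by (simp add: A_m A_add A_addL brel_eq)
  subgoal for c l r using X b brel_g3[of l "A z x" "ma r b" "A x y" sa c ma "B x"]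
    by (simp add: A_m A_sc brel_eq)
  subgoal for c l r using X b brel_g4[of l "A z x" "ma r b" "A x y" sa c ma "B x"]
    by (simp add: A_m A_sc A_scL brel_eq)
  subgoal for l \<beta> r using X b brel_g5[of l "A z x" \<beta> "B x" "ma r b" "A x y" ma sa]
    by (simp add: A_m B_A A_assoc brel_eq)
  done

lemma R2_add_right:
  assumes X: "w \<in> X" "y \<in> X" "z \<in> X" "x \<in> X" and u: "u \<in> fin (A z x \<times> A x w)"
    and b: "b \<in> A w y" "b' \<in> A w y"
  shows "(R2 ma (b + b') u, fadd (R2 ma b u) (R2 ma b' u)) \<in> brel sa ma (B x) (A z x) (A x y)"
proof -
  have "fadd (R2 ma b u) (R2 ma b' u) =
      lin_ext u (\<lambda>p. fadd ((\<lambda>(l, r). fdelta (l, ma r b)) p) ((\<lambda>(l, r). fdelta (l, ma r b')) p))"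
    by (simp add: R2_def lin_ext_fun_fadd)
  moreover have "(R2 ma (b + b') u,
      lin_ext u (\<lambda>p. fadd ((\<lambda>(l, r). fdelta (l, ma r b)) p) ((\<lambda>(l, r). fdelta (l, ma r b')) p)))
     \<in> brel sa ma (B x) (A z x) (A x y)"
    unfolding R2_def brel_eq
    apply (rule trel_lin_cong_pair[OF fin_finite[OF u]])
    subgoal for l r using fin_pair[OF u, of l r] X b brel_g2[of l "A z x" "ma r b" "A x y" "ma r b'" sa ma "B x"]
      by (simp add: A_m A_add A_addR brel_eq)
    done
  ultimately show ?thesis by simp
qed

lemma R2_sc_right:
  assumes X: "w \<in> X" "y \<in> X" "z \<in> X" "x \<in> X" and u: "u \<in> fin (A z x \<times> A x w)"
    and b: "b \<in> A w y"
  shows "(R2 ma (sa c b) u, fscale c (R2 ma b u)) \<in> brel sa ma (B x) (A z x) (A x y)"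
proof -
  have "fscale c (R2 ma b u) = lin_ext u (\<lambda>p. fscale c ((\<lambda>(l, r). fdelta (l, ma r b)) p))"
    by (simp add: R2_def lin_ext_fun_fscale)
  moreover have "(R2 ma (sa c b) u, lin_ext u (\<lambda>p. fscale c ((\<lambda>(l, r). fdelta (l, ma r b)) p)))
     \<in> brel sa ma (B x) (A z x) (A x y)"
    unfolding R2_def brel_eq
    apply (rule trel_lin_cong_pair[OF fin_finite[OF u]])
    subgoal for l r using fin_pair[OF u, of l r] X b brel_g4[of l "A z x" "ma r b" "A x y" sa c ma "B x"]
      by (simp add: A_m A_sc A_scR brel_eq)
    done
  ultimately show ?thesis by simp
qed

lemma R2_R2:
  assumes X: "w \<in> X" "v \<in> X" "y \<in> X" "x \<in> X" and u: "u \<in> fin (A z x \<times> A x w)"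
    and b: "b \<in> A w v" "b' \<in> A v y"
  shows "R2 ma b' (R2 ma b u) = R2 ma (ma b b') u"
proof -
  have "R2 ma b' (R2 ma b u) = lin_ext u (\<lambda>p. lin_ext ((\<lambda>(l, r). fdelta (l, ma r b)) p) (\<lambda>(l, r). fdelta (l, ma r b')))"
    unfolding R2_def
    by (rule lin_ext_assoc[OF fin_finite[OF u]]) (auto simp: fin_fdelta_fin split: prod.split)
  also have "\<dots> = R2 ma (ma b b') u"
    unfolding R2_def
    apply (rule lin_ext_cong_pair)
    subgoal for l r using fin_pair[OF u, of l r] X b by (simp add: lin_ext_fdelta A_assoc)
    done
  finally show ?thesis .
qed

lemma can_eq: "canp ma rho z x u = lin_ext u (\<lambda>(a, a'). R ma a' (rho z x a))"
  by (simp add: canp_def R_def)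

lemma can_fdelta: "canp ma rho z x (fdelta (a, a')) = R ma a' (rho z x a)"
  by (simp add: can_eq lin_ext_fdelta)

lemma can_fin:
  assumes "x \<in> X" "y \<in> X" "z \<in> X" "u \<in> fin (A z x \<times> A x y)"
  shows "canp ma rho z x u \<in> fin (A z y \<times> H z x)"
  unfolding can_eq
  apply (rule lin_ext_fin_pair[OF assms(4)])
  subgoal for a a' using assms by (simp add: R_fin rho_in)
  done

lemma can_assoc:
  assumes "u \<in> fin S" "\<And>p. p \<in> S \<Longrightarrow> f p \<in> fin T"
  shows "canp ma rho z x (lin_ext u f) = lin_ext u (\<lambda>p. canp ma rho z x (f p))"
  unfolding canp_def by (rule lin_ext_assoc_fin[OF assms])

lemma can_bal:
  assumes X: "x \<in> X" "y \<in> X" "z \<in> X" and a: "a \<in> A z x" and \<beta>: "\<beta> \<in> B x" and a': "a' \<in> A x y"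
  shows "(R ma a' (rho z x (ma a \<beta>)), R ma (ma \<beta> a') (rho z x a)) \<in> krel2 sa sh (A z y) (H z x)"
proof -
  have \<beta>A: "\<beta> \<in> A x x" using B_A X \<beta> by blast
  let ?M = "lin_ext (rho z x a) (\<lambda>(a0, h). lin_ext (rho x x \<beta>) (\<lambda>(b0, g). fdelta (ma a0 b0, mh h g)))"
  have 1: "(R ma a' (rho z x (ma a \<beta>)), R ma a' ?M) \<in> krel2 sa sh (A z y) (H z x)"
    by (rule R_rel[OF X(1,2,3,1) a' rho_m[OF X(3,1,1) a \<beta>A]])
  have Fin: "\<And>a0 h. a0 \<in> A z x \<Longrightarrow> h \<in> H z x \<Longrightarrow>
      lin_ext (rho x x \<beta>) (\<lambda>(b0, g). fdelta (ma a0 b0, mh h g)) \<in> fin (A z x \<times> H z x)"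
    using X \<beta>A by (intro lin_ext_fin_pair[OF rho_in]) (auto intro!: fin_fdelta A_m H_m)
  have 2: "R ma a' ?M = lin_ext (rho z x a)
      (\<lambda>(a0, h). lin_ext (rho x x \<beta>) (\<lambda>(b0, g). fdelta (ma (ma a0 b0) a', mh h g)))"
    unfolding R_def
    apply (subst lin_ext_assoc_fin[OF rho_in[OF X(3,1) a], where T = "A z x \<times> H z x"])
    subgoal for p using Fin by (cases p) auto
    apply (rule lin_ext_cong_pair)
    subgoal for a0 h
      apply simp
      apply (subst lin_ext_assoc[OF rho_fin[OF X(1,1) \<beta>A]])
       apply (auto simp: fin_fdelta_fin split: prod.split)[1]
      apply (rule lin_ext_cong_pair)
      apply (simp add: lin_ext_fdelta)
      done
    done
  have 3: "(lin_ext (rho x x \<beta>) (\<lambda>(b0, g). fdelta (ma (ma a0 b0) a', mh h g)),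
            fdelta (ma a0 (ma \<beta> a'), h)) \<in> krel2 sa sh (A z y) (H z x)"
    if ah: "a0 \<in> A z x" "h \<in> H z x" for a0 h
  proof -
    have P: "(lin_ext (rho x x \<beta>) (\<lambda>(b0, g). fdelta (ma (ma a0 b0) a', mh h g)),
           lin_ext (fdelta (\<beta>, uh x)) (\<lambda>(b0, g). fdelta (ma (ma a0 b0) a', mh h g))) \<in> krel2 sa sh (A z y) (H z x)"
      by (rule prod_krel[where \<phi>="\<lambda>b0. ma (ma a0 b0) a'" and \<psi>="\<lambda>g. mh h g", OF B_rho[OF X(1) \<beta>]])
         (use X ah a' in \<open>auto intro: A_m A_add A_sc H_m H_add H_sc simp: A_addR A_addL A_scR A_scL H_addR H_scR A_m\<close>)
    have e: "lin_ext (fdelta (\<beta>, uh x)) (\<lambda>(b0, g). fdelta (ma (ma a0 b0) a', mh h g)) = fdelta (ma a0 (ma \<beta> a'), h)"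
      using X ah a' \<beta>A by (simp add: lin_ext_fdelta A_assoc H_uR)
    show ?thesis using P unfolding e .
  qed
  have 4: "(lin_ext (rho z x a) (\<lambda>(a0, h). lin_ext (rho x x \<beta>) (\<lambda>(b0, g). fdelta (ma (ma a0 b0) a', mh h g))),
            R ma (ma \<beta> a') (rho z x a)) \<in> krel2 sa sh (A z y) (H z x)"
    unfolding R_def krel2_eq
    apply (rule trel_lin_cong_pair[OF rho_fin[OF X(3,1) a]])
    subgoal for a0 h using 3[of a0 h] fin_pair[OF rho_in[OF X(3,1) a], of a0 h] by (simp add: krel2_eq)
    done
  show ?thesis using 1 2 4 unfolding krel2_eq by (metis trel_trans)
qed

lemma can_rel:
  assumes X: "x \<in> X" "y \<in> X" "z \<in> X" and uv: "(u, v) \<in> brel sa ma (B x) (A z x) (A x y)"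
  shows "(canp ma rho z x u, canp ma rho z x v) \<in> krel2 sa sh (A z y) (H z x)"
  unfolding can_eq krel2_eq
  apply (rule brel_map[OF uv])
  subgoal for a b using X by (simp add: R_fin rho_in)
  subgoal for a a' b
  proof -
    assume h: "a \<in> A z x" "a' \<in> A z x" "b \<in> A x y"
    have "(R ma b (rho z x (a + a')), R ma b (fadd (rho z x a) (rho z x a'))) \<in> krel2 sa sh (A z y) (H z x)"
      by (rule R_rel[OF X(1,2,3,1) h(3) rho_add[OF X(3,1) h(1,2)]])
    moreover have "R ma b (fadd (rho z x a) (rho z x a')) = fadd (R ma b (rho z x a)) (R ma b (rho z x a'))"
      using X h by (simp add: R_fadd rho_fin)
    ultimately show ?thesis by (simp add: krel2_eq)
  qed
  subgoal for a b b' using R_add_right[OF X(1,2,3,1) rho_in[OF X(3,1)]] by (simp add: krel2_eq)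
  subgoal for c a b
  proof -
    assume h: "a \<in> A z x" "b \<in> A x y"
    have "(R ma b (rho z x (sa c a)), R ma b (fscale c (rho z x a))) \<in> krel2 sa sh (A z y) (H z x)"
      by (rule R_rel[OF X(1,2,3,1) h(2) rho_sc[OF X(3,1) h(1)]])
    moreover have "R ma b (fscale c (rho z x a)) = fscale c (R ma b (rho z x a))"
      using X h by (simp add: R_fscale rho_fin)
    ultimately show ?thesis by (simp add: krel2_eq)
  qed
  subgoal for c a b using R_sc_right[OF X(1,2,3,1) rho_in[OF X(3,1)]] by (simp add: krel2_eq)
  subgoal for a \<beta> a' using can_bal[OF X] by (simp add: krel2_eq)
  done

end

lemma R_assoc:
  assumes "u \<in> fin S" "\<And>p. p \<in> S \<Longrightarrow> f p \<in> fin T"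
  shows "R m b (lin_ext u f) = lin_ext u (\<lambda>p. R m b (f p))"
  unfolding R_def by (rule lin_ext_assoc_fin[OF assms])

lemma R2_assoc:
  assumes "u \<in> fin S" "\<And>p. p \<in> S \<Longrightarrow> f p \<in> fin T"
  shows "R2 m b (lin_ext u f) = lin_ext u (\<lambda>p. R2 m b (f p))"
  unfolding R2_def by (rule lin_ext_assoc_fin[OF assms])

context galc
begin

lemma can_R2:
  assumes X: "x \<in> X" "y \<in> X" "z \<in> X" and g: "g \<in> fin (A z x \<times> A x z)" and a: "a \<in> A z y"
  shows "canp ma rho z x (R2 ma a g) = R ma a (canp ma rho z x g)"
proof -
  have "canp ma rho z x (R2 ma a g) = lin_ext g (\<lambda>p. canp ma rho z x ((\<lambda>(l, r). fdelta (l, ma r a)) p))"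
    unfolding R2_def
    apply (rule can_assoc[OF g, where T = "A z x \<times> A x y"])
    subgoal for p using X a by (cases p) (auto intro!: fin_fdelta A_m[OF X(1) X(3) X(2)])
    done
  also have "\<dots> = lin_ext g (\<lambda>(l, r). R ma (ma r a) (rho z x l))"
    by (rule lin_ext_cong_pair) (simp add: can_fdelta)
  also have "\<dots> = lin_ext g (\<lambda>p. R ma a ((\<lambda>(l, r). R ma r (rho z x l)) p))"
    apply (rule lin_ext_cong_pair)
    subgoal for l r using fin_pair[OF g, of l r] X a by (simp add: R_R[OF X(1,3,2,3) rho_in[OF X(3,1)]])
    done
  also have "\<dots> = R ma a (canp ma rho z x g)"
    unfolding can_eq
    apply (rule R_assoc[OF g, where T = "A z z \<times> H z x", symmetric])
    subgoal for p using X by (cases p) (auto intro!: R_fin rho_in)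
    done
  finally show ?thesis .
qed

lemma two_three:
  assumes X: "x \<in> X" "z \<in> X"
    and bij: "bij_betw (qmap (canp ma rho z x) (krel2 sa sh (A z z) (H z x)))
                  (tensB sa ma (B x) (A z x) (A x z)) (tensK sa sh (A z z) (H z x))"
    and li: "\<exists>g. \<forall>C\<in>tensB sa ma (B x) (A z x) (A x x).
                 g (qmap (canp ma rho z x) (krel2 sa sh (A z x) (H z x)) C) = C"
  shows "\<exists>\<gamma> :: 'h \<Rightarrow> ('a \<times> 'a \<Rightarrow> 'k).
         qlinear_on sh (H z x) (free2 (A z x) (A x z)) (brel sa ma (B x) (A z x) (A x z)) \<gamma> \<and>
         (\<forall>h\<in>H z x. (canp ma rho z x (\<gamma> h), fdelta (ua z, h)) \<in> krel2 sa sh (A z z) (H z x)) \<and>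
         (\<forall>a\<in>A z x.
            (lin_ext (rho z x a) (\<lambda>(a0, h). lin_ext (\<gamma> h) (\<lambda>(l, r). fdelta (l, ma r a0))),
             fdelta (a, ua x)) \<in> brel sa ma (B x) (A z x) (A x x))"
proof -
  let ?f = "canp ma rho z x"
  let ?D = "fin (A z x \<times> A x z) :: ('a \<times> 'a \<Rightarrow> 'k) set"
  let ?r = "brel sa ma (B x) (A z x) (A x z) :: (('a \<times> 'a \<Rightarrow> 'k) \<times> _) set"
  let ?D' = "fin (A z z \<times> H z x) :: ('a \<times> 'h \<Rightarrow> 'k) set"
  let ?r' = "krel2 sa sh (A z z) (H z x) :: (('a \<times> 'h \<Rightarrow> 'k) \<times> _) set"
  have eqr: "equiv ?D ?r" unfolding brel_eq by (rule trel_fin_equiv)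
  have eqr': "equiv ?D' ?r'" unfolding krel2_eq by (rule trel_fin_equiv)
  have resp: "\<And>u v. (u, v) \<in> ?r \<Longrightarrow> (?f u, ?f v) \<in> ?r'" by (rule can_rel[OF X(1,2,2)])
  have bij': "bij_betw (qmap ?f ?r') (?D // ?r) (?D' // ?r')"
    using bij by (simp add: tensB_def tensK_def free2_fin)
  have surj: "qmap ?f ?r' ` (?D // ?r) = ?D' // ?r'" using bij' by (simp add: bij_betw_def)
  have inj: "inj_on (qmap ?f ?r') (?D // ?r)" using bij' by (simp add: bij_betw_def)
  have ex: "\<exists>u. u \<in> ?D \<and> (?f u, fdelta (ua z, h)) \<in> ?r'" if h: "h \<in> H z x" for h
  proof -
    have "fdelta (ua z, h) \<in> ?D'" using h X by (auto intro!: fin_fdelta A_u)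
    then show ?thesis using qmap_surj_rel[OF eqr eqr' resp surj] by blast
  qed
  define \<gamma> where "\<gamma> h = (SOME u. u \<in> ?D \<and> (?f u, fdelta (ua z, h)) \<in> ?r')" for h
  have \<gamma>: "\<gamma> h \<in> ?D \<and> (?f (\<gamma> h), fdelta (ua z, h)) \<in> ?r'" if h: "h \<in> H z x" for h
    unfolding \<gamma>_def by (rule someI_ex[OF ex[OF h]])
  have injrel: "\<And>u v. u \<in> ?D \<Longrightarrow> v \<in> ?D \<Longrightarrow> (?f u, ?f v) \<in> ?r' \<Longrightarrow> (u, v) \<in> ?r"
    by (rule qmap_inj_rel[OF eqr eqr' resp inj])
  have ql: "qlinear_on sh (H z x) (free2 (A z x) (A x z)) ?r \<gamma>"
    unfolding qlinear_on_def free2_fin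
  proof (intro conjI ballI allI)
    fix h assume "h \<in> H z x" then show "\<gamma> h \<in> ?D" using \<gamma> by blast
  next
    fix h h' assume h: "h \<in> H z x" "h' \<in> H z x"
    have hh: "h + h' \<in> H z x" using h X by (simp add: H_add)
    show "(\<gamma> (h + h'), fadd (\<gamma> h) (\<gamma> h')) \<in> ?r"
    proof (rule injrel)
      show "\<gamma> (h + h') \<in> ?D" using \<gamma>[OF hh] by blast
      show "fadd (\<gamma> h) (\<gamma> h') \<in> ?D" using \<gamma>[OF h(1)] \<gamma>[OF h(2)] by (simp add: fin_fadd)
      have 1: "(?f (\<gamma> (h + h')), fdelta (ua z, h + h')) \<in> ?r'" using \<gamma>[OF hh] by blast
      have 2: "(fdelta (ua z, h + h'), fadd (fdelta (ua z, h)) (fdelta (ua z, h'))) \<in> ?r'"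
        using X h by (intro krel2_g2) (auto intro: A_u H_add)
      have 3: "(fadd (?f (\<gamma> h)) (?f (\<gamma> h')), fadd (fdelta (ua z, h)) (fdelta (ua z, h'))) \<in> ?r'"
        using \<gamma>[OF h(1)] \<gamma>[OF h(2)] unfolding krel2_eq by (intro trel_fadd) auto
      have 4: "?f (fadd (\<gamma> h) (\<gamma> h')) = fadd (?f (\<gamma> h)) (?f (\<gamma> h'))"
      proof -
        have g1: "\<gamma> h \<in> ?D" and g2: "\<gamma> h' \<in> ?D" using \<gamma>[OF h(1)] \<gamma>[OF h(2)] by blast+
        show ?thesis by (simp only: canp_def lin_ext_fadd[OF fin_finite[OF g1] fin_finite[OF g2]])
      qed
      show "(?f (\<gamma> (h + h')), ?f (fadd (\<gamma> h) (\<gamma> h'))) \<in> ?r'"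
        using 1 2 3 4 unfolding krel2_eq by (metis trel_trans trel_sym)
    qed
  next
    fix c h assume h: "h \<in> H z x"
    have hh: "sh c h \<in> H z x" using h X by (simp add: H_sc)
    show "(\<gamma> (sh c h), fscale c (\<gamma> h)) \<in> ?r"
    proof (rule injrel)
      show "\<gamma> (sh c h) \<in> ?D" using \<gamma>[OF hh] by blast
      show "fscale c (\<gamma> h) \<in> ?D" using \<gamma>[OF h] by (simp add: fin_fscale)
      have 1: "(?f (\<gamma> (sh c h)), fdelta (ua z, sh c h)) \<in> ?r'" using \<gamma>[OF hh] by blast
      have 2: "(fdelta (ua z, sh c h), fscale c (fdelta (ua z, h))) \<in> ?r'"
        using X h by (intro krel2_g4) (auto intro: A_u H_sc)
      have 3: "(fscale c (?f (\<gamma> h)), fscale c (fdelta (ua z, h))) \<in> ?r'"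
        using \<gamma>[OF h] unfolding krel2_eq by (intro trel_fscale) auto
      have 4: "?f (fscale c (\<gamma> h)) = fscale c (?f (\<gamma> h))"
      proof -
        have g1: "\<gamma> h \<in> ?D" using \<gamma>[OF h] by blast
        show ?thesis by (simp only: canp_def lin_ext_fscale[OF fin_finite[OF g1]])
      qed
      show "(?f (\<gamma> (sh c h)), ?f (fscale c (\<gamma> h))) \<in> ?r'"
        using 1 2 3 4 unfolding krel2_eq by (metis trel_trans trel_sym)
    qed
  qed
  have c1: "\<forall>h\<in>H z x. (?f (\<gamma> h), fdelta (ua z, h)) \<in> ?r'" using \<gamma> by blast
  have c2: "(lin_ext (rho z x a) (\<lambda>(a0, h). lin_ext (\<gamma> h) (\<lambda>(l, r). fdelta (l, ma r a0))),
             fdelta (a, ua x)) \<in> brel sa ma (B x) (A z x) (A x x)" if a: "a \<in> A z x" for a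
  proof -
    let ?Dx = "fin (A z x \<times> A x x) :: ('a \<times> 'a \<Rightarrow> 'k) set"
    let ?rx = "brel sa ma (B x) (A z x) (A x x) :: (('a \<times> 'a \<Rightarrow> 'k) \<times> _) set"
    let ?D'x = "fin (A z x \<times> H z x) :: ('a \<times> 'h \<Rightarrow> 'k) set"
    let ?r'x = "krel2 sa sh (A z x) (H z x) :: (('a \<times> 'h \<Rightarrow> 'k) \<times> _) set"
    have eqrx: "equiv ?Dx ?rx" unfolding brel_eq by (rule trel_fin_equiv)
    have eqr'x: "equiv ?D'x ?r'x" unfolding krel2_eq by (rule trel_fin_equiv)
    have respx: "\<And>u v. (u, v) \<in> ?rx \<Longrightarrow> (?f u, ?f v) \<in> ?r'x" by (rule can_rel[OF X(1,1,2)])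
    have injx: "inj_on (qmap ?f ?r'x) (?Dx // ?rx)"
      using left_inv_inj[OF li] by (simp add: tensB_def free2_fin)
    define W where "W = lin_ext (rho z x a) (\<lambda>(a0, h). R2 ma a0 (\<gamma> h))"
    have Weq: "lin_ext (rho z x a) (\<lambda>(a0, h). lin_ext (\<gamma> h) (\<lambda>(l, r). fdelta (l, ma r a0))) = W"
      by (simp add: W_def R2_def)
    have \<gamma>fin: "\<And>h. h \<in> H z x \<Longrightarrow> \<gamma> h \<in> ?D" using \<gamma> by blast
    have WD: "W \<in> ?Dx" unfolding W_def
      by (rule lin_ext_fin_pair[OF rho_in[OF X(2,1) a]]) (use X in \<open>auto intro!: R2_fin[OF X(2) X(1) X(1)] \<gamma>fin\<close>)
    have dD: "fdelta (a, ua x) \<in> ?Dx" using a X by (auto intro!: fin_fdelta A_u)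
    have "?f W = lin_ext (rho z x a) (\<lambda>p. ?f ((\<lambda>(a0, h). R2 ma a0 (\<gamma> h)) p))"
      unfolding W_def
      apply (rule can_assoc[OF rho_in[OF X(2,1) a], where T = "A z x \<times> A x x"])
      subgoal for p using X by (cases p) (auto intro!: R2_fin[OF X(2) X(1) X(1)] \<gamma>fin)
      done
    also have "\<dots> = lin_ext (rho z x a) (\<lambda>(a0, h). R ma a0 (?f (\<gamma> h)))"
      apply (rule lin_ext_cong_pair)
      subgoal for a0 h using fin_pair[OF rho_in[OF X(2,1) a], of a0 h] X
        by (simp add: can_R2[OF X(1,1,2) \<gamma>fin])
      done
    finally have fW: "?f W = lin_ext (rho z x a) (\<lambda>(a0, h). R ma a0 (?f (\<gamma> h)))" .
    have "(lin_ext (rho z x a) (\<lambda>(a0, h). R ma a0 (?f (\<gamma> h))),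
           lin_ext (rho z x a) (\<lambda>(a0, h). R ma a0 (fdelta (ua z, h)))) \<in> ?r'x"
      unfolding krel2_eq
      apply (rule trel_lin_cong_pair[OF rho_fin[OF X(2,1) a]])
      subgoal for a0 h using fin_pair[OF rho_in[OF X(2,1) a], of a0 h] X c1
        using R_rel[OF X(2,1,2,1), of a0 "?f (\<gamma> h)" "fdelta (ua z, h)"] by (simp add: krel2_eq)
      done
    moreover have "lin_ext (rho z x a) (\<lambda>(a0, h). R ma a0 (fdelta (ua z, h))) = rho z x a"
    proof -
      have "lin_ext (rho z x a) (\<lambda>(a0, h). R ma a0 (fdelta (ua z, h))) = lin_ext (rho z x a) (\<lambda>(a0, h). fdelta (a0, h))"
        apply (rule lin_ext_cong_pair)
        subgoal for a0 h using fin_pair[OF rho_in[OF X(2,1) a], of a0 h] X by (simp add: R_fdelta A_uL)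
        done
      then show ?thesis using lin_ext_fdelta_id'[OF rho_fin[OF X(2,1) a]] by simp
    qed
    moreover have "?f (fdelta (a, ua x)) = rho z x a"
      by (simp add: can_fdelta R_unit[OF X(1,2) rho_in[OF X(2,1) a]])
    ultimately have "(?f W, ?f (fdelta (a, ua x))) \<in> ?r'x" using fW by simp
    note fuv = this
    have "(W, fdelta (a, ua x)) \<in> ?rx"
      apply (rule qmap_inj_rel[where f = "?f" and r' = "?r'x" and D' = "?D'x"])
            apply (rule eqrx)
           apply (rule eqr'x)
          apply (erule respx)
         apply (rule injx)
        apply (rule WD)
       apply (rule dD)
      apply (rule fuv)
      done
    then show ?thesis using Weq by simp
  qed
  show ?thesis using ql c1 c2 by blast
qed

end

context galc
begin

lemma three_one:
  assumes X: "x \<in> X" "y \<in> X" "z \<in> X"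
    and ql: "qlinear_on sh (H z x) (free2 (A z x) (A x z)) (brel sa ma (B x) (A z x) (A x z)) \<gamma>"
    and c1: "\<forall>h\<in>H z x. (canp ma rho z x (\<gamma> h), fdelta (ua z, h)) \<in> krel2 sa sh (A z z) (H z x)"
    and c2: "\<forall>a\<in>A z x.
            (lin_ext (rho z x a) (\<lambda>(a0, h). lin_ext (\<gamma> h) (\<lambda>(l, r). fdelta (l, ma r a0))),
             fdelta (a, ua x)) \<in> brel sa ma (B x) (A z x) (A x x)"
  shows "bij_betw (qmap (canp ma rho z x) (krel2 sa sh (A z y) (H z x)))
                  (tensB sa ma (B x) (A z x) (A x y)) (tensK sa sh (A z y) (H z x))"
proof -
  let ?f = "canp ma rho z x"
  let ?D = "fin (A z x \<times> A x y) :: ('a \<times> 'a \<Rightarrow> 'k) set"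
  let ?r = "brel sa ma (B x) (A z x) (A x y) :: (('a \<times> 'a \<Rightarrow> 'k) \<times> _) set"
  let ?D' = "fin (A z y \<times> H z x) :: ('a \<times> 'h \<Rightarrow> 'k) set"
  let ?r' = "krel2 sa sh (A z y) (H z x) :: (('a \<times> 'h \<Rightarrow> 'k) \<times> _) set"
  have \<gamma>in: "\<And>h. h \<in> H z x \<Longrightarrow> \<gamma> h \<in> fin (A z x \<times> A x z)"
    using ql by (simp add: qlinear_on_def free2_fin)
  have \<gamma>add: "\<And>h h'. h \<in> H z x \<Longrightarrow> h' \<in> H z x \<Longrightarrow>
      (\<gamma> (h + h'), fadd (\<gamma> h) (\<gamma> h')) \<in> brel sa ma (B x) (A z x) (A x z)"
    using ql by (simp add: qlinear_on_def)
  have \<gamma>sc: "\<And>c h. h \<in> H z x \<Longrightarrow>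
      (\<gamma> (sh c h), fscale c (\<gamma> h)) \<in> brel sa ma (B x) (A z x) (A x z)"
    using ql by (simp add: qlinear_on_def)
  define IV where "IV u = lin_ext u (\<lambda>(a, h). R2 ma a (\<gamma> h))" for u :: "'a \<times> 'h \<Rightarrow> 'k"
  have eqr: "equiv ?D ?r" unfolding brel_eq by (rule trel_fin_equiv)
  have eqr': "equiv ?D' ?r'" unfolding krel2_eq by (rule trel_fin_equiv)
  have resp: "\<And>u v. (u, v) \<in> ?r \<Longrightarrow> (?f u, ?f v) \<in> ?r'" by (rule can_rel[OF X])
  have R2in: "\<And>a h. a \<in> A z y \<Longrightarrow> h \<in> H z x \<Longrightarrow> R2 ma a (\<gamma> h) \<in> ?D"
    by (rule R2_fin[OF X(3,2,1) \<gamma>in])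
  have resp': "(IV u, IV v) \<in> ?r" if uv: "(u, v) \<in> ?r'" for u v
    unfolding IV_def brel_eq
    apply (rule krel2_map[OF uv])
    subgoal for a h by (simp add: R2in)
    subgoal for a a' h using R2_add_right[OF X(3,2,3,1) \<gamma>in] by (simp add: brel_eq)
    subgoal for a h h'
    proof -
      assume h: "a \<in> A z y" "h \<in> H z x" "h' \<in> H z x"
      have "(R2 ma a (\<gamma> (h + h')), R2 ma a (fadd (\<gamma> h) (\<gamma> h'))) \<in> ?r"
        by (rule R2_rel[OF X(3,2,3,1) h(1) \<gamma>add[OF h(2,3)]])
      moreover have "R2 ma a (fadd (\<gamma> h) (\<gamma> h')) = fadd (R2 ma a (\<gamma> h)) (R2 ma a (\<gamma> h'))"
        by (rule R2_fadd[OF fin_finite[OF \<gamma>in[OF h(2)]] fin_finite[OF \<gamma>in[OF h(3)]]])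
      ultimately show ?thesis by (simp add: brel_eq)
    qed
    subgoal for c a h using R2_sc_right[OF X(3,2,3,1) \<gamma>in] by (simp add: brel_eq)
    subgoal for c a h
    proof -
      assume h: "a \<in> A z y" "h \<in> H z x"
      have "(R2 ma a (\<gamma> (sh c h)), R2 ma a (fscale c (\<gamma> h))) \<in> ?r"
        by (rule R2_rel[OF X(3,2,3,1) h(1) \<gamma>sc[OF h(2)]])
      moreover have "R2 ma a (fscale c (\<gamma> h)) = fscale c (R2 ma a (\<gamma> h))"
        by (rule R2_fscale[OF fin_finite[OF \<gamma>in[OF h(2)]]])
      ultimately show ?thesis by (simp add: brel_eq)
    qed
    done
  have pt1: "(IV (R ma a' (rho z x a)), fdelta (a, a')) \<in> ?r" if a: "a \<in> A z x" "a' \<in> A x y" for a a'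
  proof -
    have rin: "rho z x a \<in> fin (A z x \<times> H z x)" by (rule rho_in[OF X(3,1) a(1)])
    define W where "W = lin_ext (rho z x a) (\<lambda>(a0, h). R2 ma a0 (\<gamma> h))"
    have "IV (R ma a' (rho z x a)) = lin_ext (rho z x a) (\<lambda>p. IV ((\<lambda>(c, h). fdelta (ma c a', h)) p))"
      unfolding IV_def R_def
      apply (rule lin_ext_assoc_fin[OF rin, where T = "A z y \<times> H z x"])
      subgoal for p using X a by (cases p) (auto intro!: fin_fdelta A_m)
      done
    also have "\<dots> = lin_ext (rho z x a) (\<lambda>(c, h). R2 ma (ma c a') (\<gamma> h))"
      by (rule lin_ext_cong_pair) (simp add: IV_def lin_ext_fdelta)
    also have "\<dots> = lin_ext (rho z x a) (\<lambda>p. R2 ma a' ((\<lambda>(c, h). R2 ma c (\<gamma> h)) p))"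
      apply (rule lin_ext_cong_pair)
      subgoal for c h using fin_pair[OF rin, of c h] X a
        by (simp add: R2_R2[OF X(3,1,2,1) \<gamma>in])
      done
    also have "\<dots> = R2 ma a' W"
      unfolding W_def
      apply (rule R2_assoc[OF rin, where T = "A z x \<times> A x x", symmetric])
      subgoal for p using X by (cases p) (auto intro!: R2_fin[OF X(3,1,1)] \<gamma>in)
      done
    finally have e1: "IV (R ma a' (rho z x a)) = R2 ma a' W" .
    have "(W, fdelta (a, ua x)) \<in> brel sa ma (B x) (A z x) (A x x)"
      using c2 a(1) by (simp add: W_def R2_def)
    then have P: "(R2 ma a' W, R2 ma a' (fdelta (a, ua x))) \<in> ?r"
      by (rule R2_rel[OF X(1,2,3,1) a(2)])
    have e2: "R2 ma a' (fdelta (a, ua x)) = fdelta (a, a')"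
      using X a by (simp add: R2_fdelta A_uL)
    show ?thesis using P unfolding e1 e2 .
  qed
  have inv1: "(IV (?f u), u) \<in> ?r" if u: "u \<in> ?D" for u
  proof -
    have "IV (?f u) = lin_ext u (\<lambda>p. IV ((\<lambda>(a, a'). R ma a' (rho z x a)) p))"
      unfolding IV_def can_eq
      apply (rule lin_ext_assoc_fin[OF u, where T = "A z y \<times> H z x"])
      subgoal for p using X by (cases p) (auto intro!: R_fin rho_in)
      done
    moreover have "(lin_ext u (\<lambda>p. IV ((\<lambda>(a, a'). R ma a' (rho z x a)) p)), lin_ext u (\<lambda>(a, b). fdelta (a, b))) \<in> ?r"
      unfolding brel_eq
      apply (rule trel_lin_cong_pair[OF fin_finite[OF u]])
      subgoal for a a' using pt1[of a a'] fin_pair[OF u, of a a'] by (simp add: brel_eq)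
      done
    ultimately show ?thesis using lin_ext_fdelta_id'[OF fin_finite[OF u]] by simp
  qed
  have inv2: "(?f (IV v), v) \<in> ?r'" if v: "v \<in> ?D'" for v
  proof -
    have "?f (IV v) = lin_ext v (\<lambda>p. ?f ((\<lambda>(a, h). R2 ma a (\<gamma> h)) p))"
      unfolding IV_def
      apply (rule can_assoc[OF v, where T = "A z x \<times> A x y"])
      subgoal for p by (cases p) (auto intro!: R2in)
      done
    also have "\<dots> = lin_ext v (\<lambda>(a, h). R ma a (?f (\<gamma> h)))"
      apply (rule lin_ext_cong_pair)
      subgoal for a h using fin_pair[OF v, of a h] by (simp add: can_R2[OF X \<gamma>in])
      done
    finally have e: "?f (IV v) = lin_ext v (\<lambda>(a, h). R ma a (?f (\<gamma> h)))" .
    have "(lin_ext v (\<lambda>(a, h). R ma a (?f (\<gamma> h))), lin_ext v (\<lambda>(a, h). R ma a (fdelta (ua z, h)))) \<in> ?r'"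
      unfolding krel2_eq
      apply (rule trel_lin_cong_pair[OF fin_finite[OF v]])
      subgoal for a h using fin_pair[OF v, of a h] c1
        R_rel[OF X(3,2,3,1), of a "?f (\<gamma> h)" "fdelta (ua z, h)"] by (simp add: krel2_eq)
      done
    moreover have "lin_ext v (\<lambda>(a, h). R ma a (fdelta (ua z, h))) = lin_ext v (\<lambda>(a, h). fdelta (a, h))"
      apply (rule lin_ext_cong_pair)
      subgoal for a h using fin_pair[OF v, of a h] X by (simp add: R_fdelta A_uL)
      done
    ultimately show ?thesis using e lin_ext_fdelta_id'[OF fin_finite[OF v]] by simp
  qed
  have "bij_betw (qmap ?f ?r') (?D // ?r) (?D' // ?r')"
    apply (rule qmap_bij[where f' = IV])
         apply (rule eqr)
        apply (rule eqr')
       apply (erule resp)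
      apply (erule resp')
     apply (erule inv1)
    apply (erule inv2)
    done
  then show ?thesis by (simp add: tensB_def tensK_def free2_fin)
qed

end

lemma kl1:
  assumes "klincat sc X Hom cmp u"
  shows "\<And>x y a b. \<lbrakk>x \<in> X; y \<in> X; a \<in> Hom x y; b \<in> Hom x y\<rbrakk> \<Longrightarrow> a + b \<in> Hom x y"
  using assms unfolding klincat_def by auto

lemma kl2:
  assumes "klincat sc X Hom cmp u"
  shows "\<And>x y a c. \<lbrakk>x \<in> X; y \<in> X; a \<in> Hom x y\<rbrakk> \<Longrightarrow> sc c a \<in> Hom x y"
  using assms unfolding klincat_def by auto

lemma kl3:
  assumes "klincat sc X Hom cmp u"
  shows "\<And>x y z a b. \<lbrakk>x \<in> X; y \<in> X; z \<in> X; a \<in> Hom x y; b \<in> Hom y z\<rbrakk> \<Longrightarrow> cmp a b \<in> Hom x z"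
  using assms unfolding klincat_def by auto

lemma kl4:
  assumes "klincat sc X Hom cmp u"
  shows "\<And>x y z a a' b. \<lbrakk>x \<in> X; y \<in> X; z \<in> X; a \<in> Hom x y; a' \<in> Hom x y; b \<in> Hom y z\<rbrakk> \<Longrightarrow> cmp (a + a') b = cmp a b + cmp a' b"
  using assms unfolding klincat_def by auto

lemma kl5:
  assumes "klincat sc X Hom cmp u"
  shows "\<And>x y z a b b'. \<lbrakk>x \<in> X; y \<in> X; z \<in> X; a \<in> Hom x y; b \<in> Hom y z; b' \<in> Hom y z\<rbrakk> \<Longrightarrow> cmp a (b + b') = cmp a b + cmp a b'"
  using assms unfolding klincat_def by auto

lemma kl6:
  assumes "klincat sc X Hom cmp u"
  shows "\<And>x y z a b c. \<lbrakk>x \<in> X; y \<in> X; z \<in> X; a \<in> Hom x y; b \<in> Hom y z\<rbrakk> \<Longrightarrow> cmp (sc c a) b = sc c (cmp a b)"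
  using assms unfolding klincat_def by auto

lemma kl7:
  assumes "klincat sc X Hom cmp u"
  shows "\<And>x y z a b c. \<lbrakk>x \<in> X; y \<in> X; z \<in> X; a \<in> Hom x y; b \<in> Hom y z\<rbrakk> \<Longrightarrow> cmp a (sc c b) = sc c (cmp a b)"
  using assms unfolding klincat_def by auto

lemma kl8:
  assumes "klincat sc X Hom cmp u"
  shows "\<And>w x y z a b d. \<lbrakk>w \<in> X; x \<in> X; y \<in> X; z \<in> X; a \<in> Hom w x; b \<in> Hom x y; d \<in> Hom y z\<rbrakk> \<Longrightarrow> cmp (cmp a b) d = cmp a (cmp b d)"
  using assms unfolding klincat_def by auto

lemma kl9:
  assumes "klincat sc X Hom cmp u"
  shows "\<And>x. x \<in> X \<Longrightarrow> u x \<in> Hom x x"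
  using assms unfolding klincat_def by auto

lemma kl10:
  assumes "klincat sc X Hom cmp u"
  shows "\<And>x y a. \<lbrakk>x \<in> X; y \<in> X; a \<in> Hom x y\<rbrakk> \<Longrightarrow> cmp (u x) a = a"
  using assms unfolding klincat_def by auto

lemma kl11:
  assumes "klincat sc X Hom cmp u"
  shows "\<And>x y a. \<lbrakk>x \<in> X; y \<in> X; a \<in> Hom x y\<rbrakk> \<Longrightarrow> cmp a (u y) = a"
  using assms unfolding klincat_def by auto



theorem theorem3p12:
  fixes X :: "'x set"
    and sh :: "'k::comm_ring_1 \<Rightarrow> 'h::ab_group_add \<Rightarrow> 'h"
    and H :: "'x \<Rightarrow> 'x \<Rightarrow> 'h set" and mh :: "'h \<Rightarrow> 'h \<Rightarrow> 'h" and uh :: "'x \<Rightarrow> 'h"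
    and dl :: "'x \<Rightarrow> 'x \<Rightarrow> 'h \<Rightarrow> ('h \<times> 'h \<Rightarrow> 'k)" and ep :: "'x \<Rightarrow> 'x \<Rightarrow> 'h \<Rightarrow> 'k"
    and sa :: "'k \<Rightarrow> 'a::ab_group_add \<Rightarrow> 'a"
    and A :: "'x \<Rightarrow> 'x \<Rightarrow> 'a set" and ma :: "'a \<Rightarrow> 'a \<Rightarrow> 'a" and ua :: "'x \<Rightarrow> 'a"
    and rho :: "'x \<Rightarrow> 'x \<Rightarrow> 'a \<Rightarrow> ('a \<times> 'h \<Rightarrow> 'k)"
  assumes hopf: "semi_hopf_cat sh X H mh uh dl ep"
    and comod: "comodule_cat sh H mh uh dl ep sa X A ma ua rho"
  defines "B \<equiv> coinv sh H uh sa A rho"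
  shows
    "((\<forall>x\<in>X. \<forall>y\<in>X. \<forall>z\<in>X.
         bij_betw (qmap (canp ma rho z x) (krel2 sa sh (A z y) (H z x)))
                  (tensB sa ma (B x) (A z x) (A x y)) (tensK sa sh (A z y) (H z x)))
      \<longleftrightarrow>
      (\<forall>x\<in>X. \<forall>z\<in>X.
         bij_betw (qmap (canp ma rho z x) (krel2 sa sh (A z z) (H z x)))
                  (tensB sa ma (B x) (A z x) (A x z)) (tensK sa sh (A z z) (H z x)) \<and>
         (\<exists>g. \<forall>C\<in>tensB sa ma (B x) (A z x) (A x x).
                 g (qmap (canp ma rho z x) (krel2 sa sh (A z x) (H z x)) C) = C)))
   \<and>
     ((\<forall>x\<in>X. \<forall>y\<in>X. \<forall>z\<in>X.
         bij_betw (qmap (canp ma rho z x) (krel2 sa sh (A z y) (H z x)))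
                  (tensB sa ma (B x) (A z x) (A x y)) (tensK sa sh (A z y) (H z x)))
      \<longleftrightarrow>
      (\<forall>x\<in>X. \<forall>z\<in>X. \<exists>\<gamma> :: 'h \<Rightarrow> ('a \<times> 'a \<Rightarrow> 'k).
         qlinear_on sh (H z x) (free2 (A z x) (A x z)) (brel sa ma (B x) (A z x) (A x z)) \<gamma> \<and>
         (\<forall>h\<in>H z x. (canp ma rho z x (\<gamma> h), fdelta (ua z, h)) \<in> krel2 sa sh (A z z) (H z x)) \<and>
         (\<forall>a\<in>A z x.
            (lin_ext (rho z x a) (\<lambda>(a0, h). lin_ext (\<gamma> h) (\<lambda>(l, r). fdelta (l, ma r a0))),
             fdelta (a, ua x)) \<in> brel sa ma (B x) (A z x) (A x x))))"
proof -
  have kA: "klincat sa X A ma ua" using comod by (simp add: comodule_cat_def)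
  have kH: "klincat sh X H mh uh" using hopf by (simp add: semi_hopf_cat_def)
  have qrho: "\<And>x y. x \<in> X \<Longrightarrow> y \<in> X \<Longrightarrow>
      qlinear_on sa (A x y) (free2 (A x y) (H x y)) (krel2 sa sh (A x y) (H x y)) (rho x y)"
    using comod by (simp add: comodule_cat_def)
  have rm: "\<And>x y z a b. \<lbrakk>x \<in> X; y \<in> X; z \<in> X; a \<in> A x y; b \<in> A y z\<rbrakk> \<Longrightarrow>
       (rho x z (ma a b), lin_ext (rho x y a) (\<lambda>(a0, h). lin_ext (rho y z b) (\<lambda>(b0, g). fdelta (ma a0 b0, mh h g))))
       \<in> krel2 sa sh (A x z) (H x z)"
    using comod unfolding comodule_cat_def by blast
  interpret G: galc X sh H mh uh sa A ma ua rho B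
  proof
    show "\<And>x y a b. \<lbrakk>x \<in> X; y \<in> X; a \<in> A x y; b \<in> A x y\<rbrakk> \<Longrightarrow> a + b \<in> A x y" by (rule kl1[OF kA])
    show "\<And>x y a c. \<lbrakk>x \<in> X; y \<in> X; a \<in> A x y\<rbrakk> \<Longrightarrow> sa c a \<in> A x y" by (rule kl2[OF kA])
    show "\<And>x y z a b. \<lbrakk>x \<in> X; y \<in> X; z \<in> X; a \<in> A x y; b \<in> A y z\<rbrakk> \<Longrightarrow> ma a b \<in> A x z" by (rule kl3[OF kA])
    show "\<And>x y z a a' b. \<lbrakk>x \<in> X; y \<in> X; z \<in> X; a \<in> A x y; a' \<in> A x y; b \<in> A y z\<rbrakk> \<Longrightarrow> ma (a + a') b = ma a b + ma a' b" by (rule kl4[OF kA])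
    show "\<And>x y z a b b'. \<lbrakk>x \<in> X; y \<in> X; z \<in> X; a \<in> A x y; b \<in> A y z; b' \<in> A y z\<rbrakk> \<Longrightarrow> ma a (b + b') = ma a b + ma a b'" by (rule kl5[OF kA])
    show "\<And>x y z a b c. \<lbrakk>x \<in> X; y \<in> X; z \<in> X; a \<in> A x y; b \<in> A y z\<rbrakk> \<Longrightarrow> ma (sa c a) b = sa c (ma a b)" by (rule kl6[OF kA])
    show "\<And>x y z a b c. \<lbrakk>x \<in> X; y \<in> X; z \<in> X; a \<in> A x y; b \<in> A y z\<rbrakk> \<Longrightarrow> ma a (sa c b) = sa c (ma a b)" by (rule kl7[OF kA])
    show "\<And>w x y z a b d. \<lbrakk>w \<in> X; x \<in> X; y \<in> X; z \<in> X; a \<in> A w x; b \<in> A x y; d \<in> A y z\<rbrakk> \<Longrightarrow> ma (ma a b) d = ma a (ma b d)" by (rule kl8[OF kA])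
    show "\<And>x. x \<in> X \<Longrightarrow> ua x \<in> A x x" by (rule kl9[OF kA])
    show "\<And>x y a. \<lbrakk>x \<in> X; y \<in> X; a \<in> A x y\<rbrakk> \<Longrightarrow> ma (ua x) a = a" by (rule kl10[OF kA])
    show "\<And>x y a. \<lbrakk>x \<in> X; y \<in> X; a \<in> A x y\<rbrakk> \<Longrightarrow> ma a (ua y) = a" by (rule kl11[OF kA])
    show "\<And>x y a b. \<lbrakk>x \<in> X; y \<in> X; a \<in> H x y; b \<in> H x y\<rbrakk> \<Longrightarrow> a + b \<in> H x y" by (rule kl1[OF kH])
    show "\<And>x y a c. \<lbrakk>x \<in> X; y \<in> X; a \<in> H x y\<rbrakk> \<Longrightarrow> sh c a \<in> H x y" by (rule kl2[OF kH])
    show "\<And>x y z a b. \<lbrakk>x \<in> X; y \<in> X; z \<in> X; a \<in> H x y; b \<in> H y z\<rbrakk> \<Longrightarrow> mh a b \<in> H x z" by (rule kl3[OF kH])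
    show "\<And>x y z a b b'. \<lbrakk>x \<in> X; y \<in> X; z \<in> X; a \<in> H x y; b \<in> H y z; b' \<in> H y z\<rbrakk> \<Longrightarrow> mh a (b + b') = mh a b + mh a b'" by (rule kl5[OF kH])
    show "\<And>x y z a b c. \<lbrakk>x \<in> X; y \<in> X; z \<in> X; a \<in> H x y; b \<in> H y z\<rbrakk> \<Longrightarrow> mh a (sh c b) = sh c (mh a b)" by (rule kl7[OF kH])
    show "\<And>x. x \<in> X \<Longrightarrow> uh x \<in> H x x" by (rule kl9[OF kH])
    show "\<And>x y a. \<lbrakk>x \<in> X; y \<in> X; a \<in> H x y\<rbrakk> \<Longrightarrow> mh a (uh y) = a" by (rule kl11[OF kH])
    show "\<And>x y a. \<lbrakk>x \<in> X; y \<in> X; a \<in> A x y\<rbrakk> \<Longrightarrow> rho x y a \<in> fin (A x y \<times> H x y)"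
      using qrho by (simp add: qlinear_on_def free2_fin)
    show "\<And>x y a a'. \<lbrakk>x \<in> X; y \<in> X; a \<in> A x y; a' \<in> A x y\<rbrakk> \<Longrightarrow>
       (rho x y (a + a'), fadd (rho x y a) (rho x y a')) \<in> krel2 sa sh (A x y) (H x y)"
      using qrho by (simp add: qlinear_on_def)
    show "\<And>x y a c. \<lbrakk>x \<in> X; y \<in> X; a \<in> A x y\<rbrakk> \<Longrightarrow>
       (rho x y (sa c a), fscale c (rho x y a)) \<in> krel2 sa sh (A x y) (H x y)"
      using qrho by (simp add: qlinear_on_def)
    show "\<And>x y z a b. \<lbrakk>x \<in> X; y \<in> X; z \<in> X; a \<in> A x y; b \<in> A y z\<rbrakk> \<Longrightarrow>
       (rho x z (ma a b), lin_ext (rho x y a) (\<lambda>(a0, h). lin_ext (rho y z b) (\<lambda>(b0, g). fdelta (ma a0 b0, mh h g))))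
       \<in> krel2 sa sh (A x z) (H x z)" by (rule rm)
    show "\<And>x \<beta>. \<lbrakk>x \<in> X; \<beta> \<in> B x\<rbrakk> \<Longrightarrow> \<beta> \<in> A x x" by (simp add: B_def coinv_def)
    show "\<And>x \<beta>. \<lbrakk>x \<in> X; \<beta> \<in> B x\<rbrakk> \<Longrightarrow> (rho x x \<beta>, fdelta (\<beta>, uh x)) \<in> krel2 sa sh (A x x) (H x x)"
      by (simp add: B_def coinv_def)
  qed
  let ?P1 = "\<forall>x\<in>X. \<forall>y\<in>X. \<forall>z\<in>X.
         bij_betw (qmap (canp ma rho z x) (krel2 sa sh (A z y) (H z x)))
                  (tensB sa ma (B x) (A z x) (A x y)) (tensK sa sh (A z y) (H z x))"
  let ?P2 = "\<forall>x\<in>X. \<forall>z\<in>X.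
         bij_betw (qmap (canp ma rho z x) (krel2 sa sh (A z z) (H z x)))
                  (tensB sa ma (B x) (A z x) (A x z)) (tensK sa sh (A z z) (H z x)) \<and>
         (\<exists>g. \<forall>C\<in>tensB sa ma (B x) (A z x) (A x x).
                 g (qmap (canp ma rho z x) (krel2 sa sh (A z x) (H z x)) C) = C)"
  let ?P3 = "\<forall>x\<in>X. \<forall>z\<in>X. \<exists>\<gamma> :: 'h \<Rightarrow> ('a \<times> 'a \<Rightarrow> 'k).
         qlinear_on sh (H z x) (free2 (A z x) (A x z)) (brel sa ma (B x) (A z x) (A x z)) \<gamma> \<and>
         (\<forall>h\<in>H z x. (canp ma rho z x (\<gamma> h), fdelta (ua z, h)) \<in> krel2 sa sh (A z z) (H z x)) \<and>
         (\<forall>a\<in>A z x.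
            (lin_ext (rho z x a) (\<lambda>(a0, h). lin_ext (\<gamma> h) (\<lambda>(l, r). fdelta (l, ma r a0))),
             fdelta (a, ua x)) \<in> brel sa ma (B x) (A z x) (A x x))"
  have 12: "?P1 \<Longrightarrow> ?P2"
  proof (intro ballI conjI)
    fix x z assume P1: ?P1 and X: "x \<in> X" "z \<in> X"
    show "bij_betw (qmap (canp ma rho z x) (krel2 sa sh (A z z) (H z x)))
                  (tensB sa ma (B x) (A z x) (A x z)) (tensK sa sh (A z z) (H z x))"
      using P1 X by blast
    have b: "bij_betw (qmap (canp ma rho z x) (krel2 sa sh (A z x) (H z x)))
                  (tensB sa ma (B x) (A z x) (A x x)) (tensK sa sh (A z x) (H z x))"
      using P1 X by blast
    show "\<exists>g. \<forall>C\<in>tensB sa ma (B x) (A z x) (A x x).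
                 g (qmap (canp ma rho z x) (krel2 sa sh (A z x) (H z x)) C) = C"
      using bij_betw_inv_into_left[OF b] by blast
  qed
  have 23: "?P2 \<Longrightarrow> ?P3"
  proof (intro ballI)
    fix x z assume P2: ?P2 and X: "x \<in> X" "z \<in> X"
    then show "\<exists>\<gamma> :: 'h \<Rightarrow> ('a \<times> 'a \<Rightarrow> 'k).
         qlinear_on sh (H z x) (free2 (A z x) (A x z)) (brel sa ma (B x) (A z x) (A x z)) \<gamma> \<and>
         (\<forall>h\<in>H z x. (canp ma rho z x (\<gamma> h), fdelta (ua z, h)) \<in> krel2 sa sh (A z z) (H z x)) \<and>
         (\<forall>a\<in>A z x.
            (lin_ext (rho z x a) (\<lambda>(a0, h). lin_ext (\<gamma> h) (\<lambda>(l, r). fdelta (l, ma r a0))),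
             fdelta (a, ua x)) \<in> brel sa ma (B x) (A z x) (A x x))"
      using G.two_three[OF X] by blast
  qed
  have 31: "?P3 \<Longrightarrow> ?P1"
  proof (intro ballI)
    fix x y z assume P3: ?P3 and X: "x \<in> X" "y \<in> X" "z \<in> X"
    then obtain \<gamma> :: "'h \<Rightarrow> ('a \<times> 'a \<Rightarrow> 'k)" where
      g: "qlinear_on sh (H z x) (free2 (A z x) (A x z)) (brel sa ma (B x) (A z x) (A x z)) \<gamma>"
         "\<forall>h\<in>H z x. (canp ma rho z x (\<gamma> h), fdelta (ua z, h)) \<in> krel2 sa sh (A z z) (H z x)"
         "\<forall>a\<in>A z x.
            (lin_ext (rho z x a) (\<lambda>(a0, h). lin_ext (\<gamma> h) (\<lambda>(l, r). fdelta (l, ma r a0))),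
             fdelta (a, ua x)) \<in> brel sa ma (B x) (A z x) (A x x)"
      by blast
    show "bij_betw (qmap (canp ma rho z x) (krel2 sa sh (A z y) (H z x)))
                  (tensB sa ma (B x) (A z x) (A x y)) (tensK sa sh (A z y) (H z x))"
      by (rule G.three_one[OF X g])
  qed
  show ?thesis using 12 23 31 by blast
qed

end
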